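(* Let $m\ge 7$ and $n\ge 1$ be integers, and let $f$ be an extendable knight's tour on $\mathcal{M}_{m-4,n}$ based at $(0,0)$. If $f$ is nullhomotopic, then for every integer $k\ge 0$ there exists a nullhomotopic knight's tour on $\mathcal{M}_{m+4k,n}$. If $f$ is generating, then for every integer $k\ge 0$ there exists a generating knight's tour on $\mathcal{M}_{m+4k,n}$.
   Context: For a positive integer $k$, let $\mathcal{S}_k$ be the graph with vertex set $\{(a,b)\in\mathbb{Z}^2: 0\le a<k\}$, where $(a,b),(a',b')$ are adjacent iff $\{|a-a'|,|b-b'|\}=\{1,2\}$. For $n\ge1$, $\sigma_k(a,b)=(k-1-a,\,b+n)$ generates a free $\mathbb{Z}$-action on $\mathcal{S}_k$, and $\mathcal{M}_{k,n}=\mathcal{S}_k/\langle\sigma_k\rangle$ (vertices and edges are orbits; multiple edges/loops allowed) is the knight's multigraph of the $k\times n$ Möbius strip board, with covering map $\phi_M:\mathcal{S}_k\to\mathcal{M}_{k,n}$. A knight's tour is a closed walk visiting every vertex exactly once apart from the repeated start/end vertex (a Hamiltonian cycle). For a tour based at $(0,0)$, take its unique lift to $\mathcal{S}_k$ starting at $(0,0)$; the tour is nullhomotopic if the lift ends at $(0,0)$ and generating if it ends at $(k-1,n)$ or $(k-1,-n)$. Let $\iota:\mathcal{S}_{m-4}\to\mathcal{S}_m$, $\iota(a,b)=(a+2,b)$. A left edge of $\mathcal{S}_m$ joins a vertex with first coordinate $2$ to one with first coordinate $3$; a right edge joins a vertex with first coordinate $m-4$ to one with first coordinate $m-3$; the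 second coordinates of the endpoints differ by $2$, and the edge is even or odd according to their parity. A collection of left and right edges is extending if: for $n$ even, it consists of exactly four edges, two even and two odd; for $n$ odd, it consists of exactly two edges, one left even or right odd and the other left odd or right even. An edge is traversed upward by a walk if the second coordinate increases along the traversal, downward otherwise. A knight's tour $f$ on $\mathcal{M}_{m-4,n}$ based at $(0,0)$ with lift $\tilde f$ to $\mathcal{S}_{m-4}$ starting at $(0,0)$ is extendable if $\iota\circ\tilde f$ traverses every edge of some extending collection of edges of $\mathcal{S}_m$, exactly half of them upward and half downward. *)

theory Defs
  imports Main
begin

type_synonym vtx = "int \<times> int"

definition in_strip :: "nat \<Rightarrow> vtx \<Rightarrow> bool" where
  "in_strip k p \<longleftrightarrow> 0 \<le> fst p \<and> fst p < int k"

definition knight_adj :: "vtx \<Rightarrow> vtx \<Rightarrow> bool" where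
  "knight_adj p q \<longleftrightarrow>
     {\<bar>fst p - fst q\<bar>, \<bar>snd p - snd q\<bar>} = {1, 2}"

definition sigma :: "nat \<Rightarrow> nat \<Rightarrow> vtx \<Rightarrow> vtx" where
  "sigma k n p = (int k - 1 - fst p, snd p + int n)"

definition sigma_pow :: "nat \<Rightarrow> nat \<Rightarrow> int \<Rightarrow> vtx \<Rightarrow> vtx" where
  "sigma_pow k n j p =
     (if even j then (fst p, snd p + j * int n)
      else (int k - 1 - fst p, snd p + j * int n))"

text \<open>Two vertices of S_k lie in the same orbit (= same vertex of M_{k,n}).\<close>
definition same_orbit :: "nat \<Rightarrow> nat \<Rightarrow> vtx \<Rightarrow> vtx \<Rightarrow> bool" where
  "same_orbit k n p q \<longleftrightarrow> (\<exists>j::int. q = sigma_pow k n j p)"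

text \<open>A knight's tour on M_{k,n} based at (0,0), represented by its unique lift
  to S_k starting at (0,0): the list w = [p_0, ..., p_N] of lifted vertices.\<close>
definition tour_lift :: "nat \<Rightarrow> nat \<Rightarrow> vtx list \<Rightarrow> bool" where
  "tour_lift k n w \<longleftrightarrow>
     2 \<le> length w \<and> w ! 0 = (0, 0) \<and>
     (\<forall>i < length w. in_strip k (w ! i)) \<and>
     (\<forall>i. Suc i < length w \<longrightarrow> knight_adj (w ! i) (w ! Suc i)) \<and>
     (\<forall>i j. i < j \<and> j < length w - 1 \<longrightarrow> \<not> same_orbit k n (w ! i) (w ! j)) \<and>
     (\<forall>v. in_strip k v \<longrightarrow> (\<exists>i < length w - 1. same_orbit k n v (w ! i))) \<and>
     same_orbit k n (w ! 0) (last w)"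

definition nullhomotopic :: "nat \<Rightarrow> nat \<Rightarrow> vtx list \<Rightarrow> bool" where
  "nullhomotopic k n w \<longleftrightarrow> last w = (0, 0)"

definition generating :: "nat \<Rightarrow> nat \<Rightarrow> vtx list \<Rightarrow> bool" where
  "generating k n w \<longleftrightarrow> last w = (int k - 1, int n) \<or> last w = (int k - 1, - int n)"

definition iota :: "vtx \<Rightarrow> vtx" where
  "iota p = (fst p + 2, snd p)"

definition left_edge :: "vtx set \<Rightarrow> bool" where
  "left_edge e \<longleftrightarrow> (\<exists>b b'. e = {(2, b), (3, b')} \<and> \<bar>b - b'\<bar> = 2)"

definition right_edge :: "nat \<Rightarrow> vtx set \<Rightarrow> bool" where
  "right_edge m e \<longleftrightarrow>
     (\<exists>b b'. e = {(int m - 4, b), (int m - 3, b')} \<and> \<bar>b - b'\<bar> = 2)"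

definition even_edge :: "vtx set \<Rightarrow> bool" where
  "even_edge e \<longleftrightarrow> (\<forall>p \<in> e. even (snd p))"

definition odd_edge :: "vtx set \<Rightarrow> bool" where
  "odd_edge e \<longleftrightarrow> (\<forall>p \<in> e. odd (snd p))"

definition extending :: "nat \<Rightarrow> nat \<Rightarrow> vtx set set \<Rightarrow> bool" where
  "extending m n C \<longleftrightarrow>
     (\<forall>e \<in> C. left_edge e \<or> right_edge m e) \<and> finite C \<and>
     (if even n then
        card C = 4 \<and> card {e \<in> C. even_edge e} = 2 \<and> card {e \<in> C. odd_edge e} = 2
      else
        (\<exists>e1 e2. C = {e1, e2} \<and> e1 \<noteq> e2 \<and>
           ((left_edge e1 \<and> even_edge e1) \<or> (right_edge m e1 \<and> odd_edge e1)) \<and>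
           ((left_edge e2 \<and> odd_edge e2) \<or> (right_edge m e2 \<and> even_edge e2))))"

definition traverses_up :: "vtx list \<Rightarrow> vtx set \<Rightarrow> bool" where
  "traverses_up u e \<longleftrightarrow>
     (\<exists>i. Suc i < length u \<and> e = {u ! i, u ! Suc i} \<and> snd (u ! i) < snd (u ! Suc i))"

definition traverses_down :: "vtx list \<Rightarrow> vtx set \<Rightarrow> bool" where
  "traverses_down u e \<longleftrightarrow>
     (\<exists>i. Suc i < length u \<and> e = {u ! i, u ! Suc i} \<and> snd (u ! Suc i) < snd (u ! i))"

definition traverses :: "vtx list \<Rightarrow> vtx set \<Rightarrow> bool" where
  "traverses u e \<longleftrightarrow> (\<exists>i. Suc i < length u \<and> e = {u ! i, u ! Suc i})"

definition extendable :: "nat \<Rightarrow> nat \<Rightarrow> vtx list \<Rightarrow> bool" where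
  "extendable m n w \<longleftrightarrow>
     tour_lift (m - 4) n w \<and>
     (\<exists>C. extending m n C \<and>
        (\<forall>e \<in> C. traverses (map iota w) e) \<and>
        card {e \<in> C. traverses_up (map iota w) e} = card C div 2 \<and>
        card {e \<in> C. traverses_down (map iota w) e} = card C div 2)"

end

theory Submission
  imports Defs "HOL-Library.Multiset"
begin

lemma knight_adj_iff:
  "knight_adj p q \<longleftrightarrow>
    (\<bar>fst p - fst q\<bar> = 1 \<and> \<bar>snd p - snd q\<bar> = 2) \<or> (\<bar>fst p - fst q\<bar> = 2 \<and> \<bar>snd p - snd q\<bar> = 1)"
  unfolding knight_adj_def by (auto simp: doubleton_eq_iff)

lemma knight_adj_sym: "knight_adj p q \<Longrightarrow> knight_adj q p"
  by (auto simp: knight_adj_iff abs_minus_commute)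

lemma sigma_pow_0[simp]: "sigma_pow K n 0 p = p"
  by (simp add: sigma_pow_def)

lemma sigma_pow_add: "sigma_pow K n i (sigma_pow K n j p) = sigma_pow K n (i + j) p"
  by (auto simp: sigma_pow_def algebra_simps)

lemma sigma_pow_even: "even j \<Longrightarrow> sigma_pow K n j p = (fst p, snd p + j * int n)"
  by (simp add: sigma_pow_def)

lemma in_strip_sigma: "in_strip K p \<Longrightarrow> in_strip K (sigma_pow K n j p)"
  by (auto simp: in_strip_def sigma_pow_def)

lemma knight_adj_sigma:
  "knight_adj (sigma_pow K n j p) (sigma_pow K n j q) \<longleftrightarrow> knight_adj p q"
  unfolding knight_adj_iff sigma_pow_def
  by (simp add: abs_minus_commute algebra_simps)


definition orb :: "nat \<Rightarrow> nat \<Rightarrow> vtx \<Rightarrow> vtx" where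
  "orb K n p = (if even (snd p div int n) then fst p else int K - 1 - fst p, snd p mod int n)"

lemma orb_sigma:
  assumes "1 \<le> n" shows "orb K n (sigma_pow K n j p) = orb K n p"
proof -
  obtain a b where p: "p = (a, b)" by (cases p)
  have d: "(b + j * int n) div int n = b div int n + j" using assms by simp
  have md: "(b + j * int n) mod int n = b mod int n" by simp
  have e: "even (b div int n + j) \<longleftrightarrow> (even (b div int n) \<longleftrightarrow> even j)" by simp
  show ?thesis
  proof (cases "even j")
    case True
    then show ?thesis unfolding orb_def sigma_pow_def p using d md e by simp
  next
    case False
    then show ?thesis unfolding orb_def sigma_pow_def p using d md e by simp
  qed
qed

lemma orb_eq_sigma:
  assumes "1 \<le> n" and "orb K n p = orb K n q"
  shows "q = sigma_pow K n (snd q div int n - snd p div int n) p"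
proof -
  obtain a b where p: "p = (a, b)" by (cases p)
  obtain a' b' where q: "q = (a', b')" by (cases q)
  have r: "b mod int n = b' mod int n" using assms(2) by (simp add: orb_def p q)
  have row: "b + (b' div int n - b div int n) * int n = b'"
  proof -
    have h1: "b = b div int n * int n + b mod int n" by simp
    have h2: "b' = b' div int n * int n + b' mod int n" by simp
    have h3: "(b' div int n - b div int n) * int n = b' div int n * int n - b div int n * int n"
      by (simp add: left_diff_distrib)
    show ?thesis using h1 h2 h3 r by linarith
  qed
  have c: "(if even (b div int n) then a else int K - 1 - a)
         = (if even (b' div int n) then a' else int K - 1 - a')"
    using assms(2) unfolding orb_def p q prod.inject fst_conv snd_conv by blast
  have e: "even (b' div int n - b div int n) \<longleftrightarrow> (even (b div int n) \<longleftrightarrow> even (b' div int n))"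
    by auto
  show ?thesis
    unfolding sigma_pow_def p q fst_conv snd_conv using row c e
    by (auto split: if_splits)
qed

lemma same_orbit_iff_orb:
  assumes "1 \<le> n" shows "same_orbit K n p q \<longleftrightarrow> orb K n p = orb K n q"
proof
  assume "same_orbit K n p q" then obtain j where "q = sigma_pow K n j p"
    unfolding same_orbit_def by blast
  then show "orb K n p = orb K n q" using orb_sigma[OF assms] by simp
next
  assume "orb K n p = orb K n q"
  then show "same_orbit K n p q" unfolding same_orbit_def using orb_eq_sigma[OF assms] by blast
qed

definition cycc :: "nat \<Rightarrow> nat \<Rightarrow> int \<Rightarrow> vtx list \<Rightarrow> bool" where
  "cycc K n c w \<longleftrightarrow> 2 \<le> length w \<and> (\<forall>x\<in>set w. in_strip K x) \<and> successively knight_adj w \<and>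
     distinct (map (orb K n) (butlast w)) \<and> last w = sigma_pow K n c (hd w) \<and>
     (\<forall>v. in_strip K v \<longrightarrow> orb K n v \<in> orb K n ` set (butlast w))"

lemma tour_lift_cycc:
  assumes n: "1 \<le> n" and t: "tour_lift K n w"
  shows "\<exists>c. cycc K n c w \<and> hd w = (0,0)"
proof -
  have len: "2 \<le> length w" using t by (simp add: tour_lift_def)
  then have ne: "w \<noteq> []" by auto
  have hd: "hd w = w ! 0" using ne by (simp add: hd_conv_nth)
  obtain c where c: "last w = sigma_pow K n c (w ! 0)"
    using t unfolding tour_lift_def same_orbit_def by blast
  have strip: "\<forall>x\<in>set w. in_strip K x" using t unfolding tour_lift_def by (metis in_set_conv_nth)
  have succ: "successively knight_adj w" using t unfolding tour_lift_def successively_conv_nth by blast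
  have dist: "distinct (map (orb K n) (butlast w))"
    unfolding distinct_conv_nth
  proof (intro allI impI)
    fix i j assume i: "i < length (map (orb K n) (butlast w))" and j: "j < length (map (orb K n) (butlast w))"
      and ij: "i \<noteq> j"
    have i': "i < length w - 1" and j': "j < length w - 1" using i j by auto
    have D: "\<forall>i j. i < j \<and> j < length w - 1 \<longrightarrow> \<not> same_orbit K n (w ! i) (w ! j)"
      using t unfolding tour_lift_def by blast
    have "orb K n (w ! i) \<noteq> orb K n (w ! j)"
    proof (cases "i < j")
      case True
      then show ?thesis using D j' same_orbit_iff_orb[OF n] by metis
    next
      case False
      then have "j < i" using ij by simp
      then show ?thesis using D i' same_orbit_iff_orb[OF n] by metis
    qed
    then show "map (orb K n) (butlast w) ! i \<noteq> map (orb K n) (butlast w) ! j"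
      using i' j' by (simp add: nth_butlast)
  qed
  have cov: "\<forall>v. in_strip K v \<longrightarrow> orb K n v \<in> orb K n ` set (butlast w)"
  proof (intro allI impI)
    fix v assume "in_strip K v"
    then obtain i where i: "i < length w - 1" and so: "same_orbit K n v (w ! i)"
      using t unfolding tour_lift_def by blast
    have "w ! i = butlast w ! i" using i by (simp add: nth_butlast)
    moreover have "i < length (butlast w)" using i by simp
    ultimately have "w ! i \<in> set (butlast w)" by (metis nth_mem)
    then show "orb K n v \<in> orb K n ` set (butlast w)" using so same_orbit_iff_orb[OF n] by auto
  qed
  show ?thesis using len strip succ dist cov c t unfolding cycc_def hd tour_lift_def by blast
qed

lemma cycc_tour_lift:
  assumes n: "1 \<le> n" and cy: "cycc K n c w" and h: "hd w = (0,0)"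
  shows "tour_lift K n w"
proof -
  have len: "2 \<le> length w" using cy by (simp add: cycc_def)
  then have ne: "w \<noteq> []" by auto
  have hd: "hd w = w ! 0" using ne by (simp add: hd_conv_nth)
  have strip: "\<forall>i < length w. in_strip K (w ! i)" using cy unfolding cycc_def by auto
  have succ: "\<forall>i. Suc i < length w \<longrightarrow> knight_adj (w ! i) (w ! Suc i)"
    using cy unfolding cycc_def successively_conv_nth by blast
  have dist: "\<forall>i j. i < j \<and> j < length w - 1 \<longrightarrow> \<not> same_orbit K n (w ! i) (w ! j)"
  proof (intro allI impI)
    fix i j assume ij: "i < j \<and> j < length w - 1"
    have d: "distinct (map (orb K n) (butlast w))" using cy by (simp add: cycc_def)
    have "map (orb K n) (butlast w) ! i \<noteq> map (orb K n) (butlast w) ! j"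
      using d ij unfolding distinct_conv_nth by auto
    then have "orb K n (w ! i) \<noteq> orb K n (w ! j)" using ij by (simp add: nth_butlast)
    then show "\<not> same_orbit K n (w ! i) (w ! j)" using same_orbit_iff_orb[OF n] by metis
  qed
  have cov: "\<forall>v. in_strip K v \<longrightarrow> (\<exists>i < length w - 1. same_orbit K n v (w ! i))"
  proof (intro allI impI)
    fix v assume "in_strip K v"
    then have "orb K n v \<in> orb K n ` set (butlast w)" using cy unfolding cycc_def by blast
    then obtain x where x: "x \<in> set (butlast w)" and o: "orb K n v = orb K n x" by auto
    obtain i where i: "i < length (butlast w)" and xi: "x = butlast w ! i" using x by (metis in_set_conv_nth)
    have "x = w ! i" using i xi by (simp add: nth_butlast)
    then show "\<exists>i < length w - 1. same_orbit K n v (w ! i)" using i o same_orbit_iff_orb[OF n] by auto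
  qed
  have so: "same_orbit K n (w ! 0) (last w)"
    using cy unfolding cycc_def same_orbit_def hd by blast
  show ?thesis unfolding tour_lift_def using len h hd strip succ dist cov so by simp
qed

definition rot1 :: "nat \<Rightarrow> nat \<Rightarrow> int \<Rightarrow> vtx list \<Rightarrow> vtx list" where
  "rot1 K n c w = tl w @ [sigma_pow K n c (w ! 1)]"

lemma cycc_rot1:
  assumes n: "1 \<le> n" and cy: "cycc K n c w"
  shows "cycc K n c (rot1 K n c w)"
proof -
  obtain x y rest where w: "w = x # y # rest"
    using cy unfolding cycc_def by (metis Suc_le_length_iff numeral_2_eq_2)
  have lst: "last w = sigma_pow K n c x" using cy w by (simp add: cycc_def)
  have r: "rot1 K n c w = y # rest @ [sigma_pow K n c y]" by (simp add: rot1_def w)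
  have strip: "\<forall>z\<in>set w. in_strip K z" using cy by (simp add: cycc_def)
  have succ: "successively knight_adj w" using cy by (simp add: cycc_def)
  have adjxy: "knight_adj x y" using succ w by simp
  have s1: "successively knight_adj (y # rest)" using succ w by simp
  have lyr: "last (y # rest) = sigma_pow K n c x" using lst w by simp
  have s2: "successively knight_adj (rot1 K n c w)"
  proof -
    have "rot1 K n c w = (y # rest) @ [sigma_pow K n c y]" using r by simp
    moreover have "knight_adj (last (y # rest)) (hd [sigma_pow K n c y])"
      using lyr adjxy knight_adj_sigma by simp
    ultimately show ?thesis using s1 by (simp only: successively_append_iff) simp
  qed
  have strip2: "\<forall>z\<in>set (rot1 K n c w). in_strip K z"
    using strip in_strip_sigma w unfolding r by auto
  have bl: "butlast w = x # butlast (y # rest)" by (simp add: w)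
  have bl2: "butlast (rot1 K n c w) = butlast (y # rest) @ [last (y # rest)]"
    unfolding r by simp
  have ol: "orb K n (last (y # rest)) = orb K n x" using lyr orb_sigma[OF n] by simp
  have m2: "map (orb K n) (butlast (rot1 K n c w)) = map (orb K n) (butlast (y # rest)) @ [orb K n x]"
    using bl2 ol by simp
  have m1: "map (orb K n) (butlast w) = orb K n x # map (orb K n) (butlast (y # rest))"
    using bl by simp
  have d1: "distinct (map (orb K n) (butlast w))" using cy by (simp add: cycc_def)
  have d2: "distinct (map (orb K n) (butlast (rot1 K n c w)))" using d1 unfolding m1 m2 by auto
  have se: "orb K n ` set (butlast (rot1 K n c w)) = orb K n ` set (butlast w)"
    using m1 m2 by (metis list.set_map set_rotate1 rotate1.simps(2))
  have cov: "\<forall>v. in_strip K v \<longrightarrow> orb K n v \<in> orb K n ` set (butlast (rot1 K n c w))"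
    using cy se by (simp add: cycc_def)
  have len: "2 \<le> length (rot1 K n c w)" using r by simp
  have last2: "last (rot1 K n c w) = sigma_pow K n c (hd (rot1 K n c w))" using r by simp
  show ?thesis unfolding cycc_def using len strip2 s2 d2 last2 cov by blast
qed

lemma cycc_rotate:
  assumes n: "1 \<le> n"
  shows "cycc K n c w \<Longrightarrow> s < length w - 1 \<Longrightarrow> \<exists>w'. cycc K n c w' \<and> hd w' = w ! s"
proof (induction s arbitrary: w)
  case 0
  then show ?case by (metis cycc_def hd_conv_nth list.size(3) not_numeral_le_zero)
next
  case (Suc s)
  have c1: "cycc K n c (rot1 K n c w)" using cycc_rot1[OF n Suc.prems(1)] .
  have l: "length (rot1 K n c w) = length w" using Suc.prems(1)
    by (cases w) (auto simp: rot1_def cycc_def)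
  obtain w' where "cycc K n c w'" "hd w' = rot1 K n c w ! s"
    using Suc.IH[OF c1] Suc.prems(2) l by auto
  moreover have "rot1 K n c w ! s = w ! Suc s"
    using Suc.prems(2) by (simp add: rot1_def nth_append nth_tl)
  ultimately show ?case by auto
qed

lemma cycc_map_sigma:
  assumes n: "1 \<le> n" and cy: "cycc K n c w"
  shows "cycc K n c (map (sigma_pow K n j) w)"
proof -
  have ne: "w \<noteq> []" using cy by (auto simp: cycc_def)
  have "map (orb K n) (butlast (map (sigma_pow K n j) w)) = map (orb K n) (butlast w)"
    by (simp add: map_butlast[symmetric] orb_sigma[OF n])
  moreover have "orb K n ` set (butlast (map (sigma_pow K n j) w)) = orb K n ` set (butlast w)"
    by (metis calculation list.set_map)
  moreover have "last (map (sigma_pow K n j) w) = sigma_pow K n c (hd (map (sigma_pow K n j) w))"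
    using cy ne by (simp add: cycc_def last_map hd_map sigma_pow_add add.commute)
  moreover have "successively knight_adj (map (sigma_pow K n j) w)"
    using cy by (simp add: cycc_def successively_map knight_adj_sigma)
  ultimately show ?thesis using cy in_strip_sigma unfolding cycc_def by auto
qed

lemma cycc_to_tour:
  assumes n: "1 \<le> n" and K: "1 \<le> K" and cy: "cycc K n c w"
  shows "\<exists>w'. tour_lift K n w' \<and> last w' = sigma_pow K n c (0,0)"
proof -
  have "in_strip K (0,0)" using K by (simp add: in_strip_def)
  then have "orb K n (0,0) \<in> orb K n ` set (butlast w)" using cy by (simp add: cycc_def)
  then obtain x where x: "x \<in> set (butlast w)" and o: "orb K n (0,0) = orb K n x" by auto
  obtain s where s: "s < length (butlast w)" and xs: "x = butlast w ! s" using x by (metis in_set_conv_nth)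
  have xw: "x = w ! s" using s xs by (simp add: nth_butlast)
  obtain t where t: "x = sigma_pow K n t (0,0)" using orb_eq_sigma[OF n o] by blast
  obtain w1 where w1: "cycc K n c w1" "hd w1 = x" using cycc_rotate[OF n cy] s xw by auto
  define w2 where "w2 = map (sigma_pow K n (- t)) w1"
  have c2: "cycc K n c w2" unfolding w2_def using cycc_map_sigma[OF n w1(1)] .
  have ne: "w1 \<noteq> []" using w1 by (auto simp: cycc_def)
  have h2: "hd w2 = (0,0)" unfolding w2_def using ne w1(2) t by (simp add: hd_map sigma_pow_add)
  have "tour_lift K n w2" using cycc_tour_lift[OF n c2 h2] .
  moreover have "last w2 = sigma_pow K n c (0,0)" using c2 h2 by (simp add: cycc_def)
  ultimately show ?thesis by blast
qed

fun expand :: "nat \<Rightarrow> nat \<Rightarrow> (nat \<Rightarrow> vtx list) \<Rightarrow> (nat \<Rightarrow> int) \<Rightarrow> nat \<Rightarrow> int \<Rightarrow> vtx list \<Rightarrow> vtx list" where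
  "expand m n P J i s [] = []"
| "expand m n P J i s (x # xs) =
     sigma_pow m n s x # map (sigma_pow m n s) (P i) @ expand m n P J (Suc i) (s + J i) xs"

definition dets :: "(nat \<Rightarrow> vtx list) \<Rightarrow> nat \<Rightarrow> nat \<Rightarrow> vtx list" where
  "dets P i k = concat (map P [i..<i + k])"

lemma dets_Suc: "dets P i (Suc k) = P i @ dets P (Suc i) k"
  unfolding dets_def by (simp add: upt_rec)

lemma dets_0[simp]: "dets P i 0 = []"
  unfolding dets_def by simp

lemma expand_append_last:
  "P (i + length xs) = [] \<Longrightarrow>
   expand m n P J i s (xs @ [y]) = expand m n P J i s xs @ [sigma_pow m n (s + sum J {i..<i + length xs}) y]"
proof (induction xs arbitrary: i s)
  case Nil
  then show ?case by simp
next
  case (Cons x xs)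
  have "P (Suc i + length xs) = []" using Cons.prems by simp
  note IH = Cons.IH[OF this]
  have "sum J {i..<i + length (x # xs)} = J i + sum J {Suc i..<Suc i + length xs}"
    by (simp add: sum.atLeast_Suc_lessThan)
  then show ?case by (simp add: IH algebra_simps)
qed

lemma length_expand: "length (expand m n P J i s xs) = length xs + length (dets P i (length xs))"
  by (induction xs arbitrary: i s) (auto simp: dets_Suc)

lemma mset_expand:
  assumes f: "\<And>j x. f (sigma_pow m n j x) = f x"
  shows "mset (map f (expand m n P J i s xs)) = mset (map f xs) + mset (map f (dets P i (length xs)))"
proof (induction xs arbitrary: i s)
  case Nil
  then show ?case by simp
next
  case (Cons x xs)
  have "map f (expand m n P J i s (x # xs)) = f x # map f (P i) @ map f (expand m n P J (Suc i) (s + J i) xs)"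
    by (simp add: f)
  moreover have fc: "f \<circ> sigma_pow m n s = f" by (rule ext) (simp add: f)
  moreover note IH = Cons.IH[of "Suc i" "s + J i", simplified]
  ultimately show ?case by (simp add: dets_Suc fc)
qed

lemma set_expand:
  "z \<in> set (expand m n P J i s xs) \<Longrightarrow>
   \<exists>j y. z = sigma_pow m n j y \<and> (y \<in> set xs \<or> y \<in> set (dets P i (length xs)))"
proof (induction xs arbitrary: i s)
  case Nil
  then show ?case by simp
next
  case (Cons x xs)
  from Cons.prems consider "z = sigma_pow m n s x" | "z \<in> sigma_pow m n s ` set (P i)"
    | "z \<in> set (expand m n P J (Suc i) (s + J i) xs)" by auto
  then show ?case
  proof cases
    case 1 then show ?thesis by (metis list.set_intros(1))
  next
    case 2 then show ?thesis by (auto simp: dets_Suc)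
  next
    case 3
    from Cons.IH[OF 3] show ?thesis by (auto simp: dets_Suc)
  qed
qed

lemma hd_expand: "xs \<noteq> [] \<Longrightarrow> hd (expand m n P J i s xs) = sigma_pow m n s (hd xs)"
  by (cases xs) auto

lemma successively_expand:
  assumes "successively knight_adj xs"
    and "\<And>k. k < length xs \<Longrightarrow> P (i + k) = [] \<Longrightarrow> J (i + k) = 0"
    and "\<And>k. k < length xs \<Longrightarrow> P (i + k) \<noteq> [] \<Longrightarrow> Suc k < length xs \<and>
            knight_adj (xs ! k) (hd (P (i + k))) \<and> successively knight_adj (P (i + k)) \<and>
            knight_adj (last (P (i + k))) (sigma_pow m n (J (i + k)) (xs ! Suc k))"
  shows "successively knight_adj (expand m n P J i s xs)"
  using assms
proof (induction xs arbitrary: i s)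
  case Nil
  then show ?case by simp
next
  case (Cons x xs)
  have s1: "successively knight_adj xs" using Cons.prems(1) by (metis successively.simps(1) successively_Cons)
  have IH: "successively knight_adj (expand m n P J (Suc i) s' xs)" for s'
    apply (rule Cons.IH[OF s1])
    using Cons.prems(2)[of "Suc k" for k] Cons.prems(3)[of "Suc k" for k] by auto
  show ?case
  proof (cases xs)
    case Nil
    have "P i = []" using Cons.prems(3)[of 0] Nil by auto
    then show ?thesis using Nil by simp
  next
    case (Cons y ys)
    have hdE: "hd (expand m n P J (Suc i) s' xs) = sigma_pow m n s' y" for s'
      using Cons by simp
    have neE: "expand m n P J (Suc i) s' xs \<noteq> []" for s' using Cons by simp
    have axy: "knight_adj x y" using Cons.prems(1) Cons by simp
    show ?thesis
    proof (cases "P i = []")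
      case True
      have "J i = 0" using Cons.prems(2)[of 0] True by simp
      then show ?thesis using True IH[of s] hdE[of s] neE[of s] axy knight_adj_sigma
        by (simp add: successively_Cons)
    next
      case False
      have c: "knight_adj x (hd (P i))" "successively knight_adj (P i)"
        "knight_adj (last (P i)) (sigma_pow m n (J i) y)"
        using Cons.prems(3)[of 0] False Cons by auto
      have a1: "knight_adj (sigma_pow m n s x) (hd (map (sigma_pow m n s) (P i)))"
        using c(1) False knight_adj_sigma by (simp add: hd_map)
      have a2: "successively knight_adj (map (sigma_pow m n s) (P i))"
        using c(2) by (simp add: successively_map knight_adj_sigma)
      have a3: "knight_adj (last (map (sigma_pow m n s) (P i))) (hd (expand m n P J (Suc i) (s + J i) xs))"
      proof -
        have "sigma_pow m n (s + J i) y = sigma_pow m n s (sigma_pow m n (J i) y)"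
          by (simp add: sigma_pow_add)
        then show ?thesis using c(3) False hdE knight_adj_sigma by (simp add: last_map)
      qed
      have "successively knight_adj (map (sigma_pow m n s) (P i) @ expand m n P J (Suc i) (s + J i) xs)"
        using a2 a3 IH False by (simp add: successively_append_iff)
      then show ?thesis using a1 False by (simp add: successively_Cons)
    qed
  qed
qed

lemma expand_pos:
  assumes "k < length xs" and "2 \<le> length (P (i + k))" and "even s" and "\<And>t. even (J t)"
  shows "\<exists>pos s'. even s' \<and> Suc pos < length (expand m n P J i s xs) \<and>
     expand m n P J i s xs ! pos = sigma_pow m n s' (P (i + k) ! 0) \<and>
     expand m n P J i s xs ! Suc pos = sigma_pow m n s' (P (i + k) ! 1)"
  using assms
proof (induction xs arbitrary: i s k)
  case Nil
  then show ?case by simp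
next
  case (Cons x xs)
  show ?case
  proof (cases k)
    case 0
    obtain a b rest where "P i = a # b # rest" using Cons.prems(2) 0
      by (metis One_nat_def Suc_1 Suc_le_length_iff add_0_right)
    then show ?thesis using Cons.prems(3) 0 by (intro exI[of _ 1] exI[of _ s]) simp
  next
    case (Suc k')
    have e: "even (s + J i)" using Cons.prems(3,4) by simp
    obtain pos s' where p: "even s'" "Suc pos < length (expand m n P J (Suc i) (s + J i) xs)"
      "expand m n P J (Suc i) (s + J i) xs ! pos = sigma_pow m n s' (P (Suc i + k') ! 0)"
      "expand m n P J (Suc i) (s + J i) xs ! Suc pos = sigma_pow m n s' (P (Suc i + k') ! 1)"
      using Cons.IH[of k' "Suc i" "s + J i"] Cons.prems Suc e by auto
    define A where "A = sigma_pow m n s x # map (sigma_pow m n s) (P i)"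
    define E where "E = expand m n P J (Suc i) (s + J i) xs"
    have eqA: "expand m n P J i s (x # xs) = A @ E" by (simp add: A_def E_def)
    have eq: "expand m n P J i s (x # xs) ! (length A + q) = E ! q" for q
      unfolding eqA by (rule nth_append_length_plus)
    have lenE: "length (expand m n P J i s (x # xs)) = length A + length E" unfolding eqA by simp
    show ?thesis
      apply (rule exI[of _ "length A + pos"], rule exI[of _ s'])
      using p eq[of pos] eq[of "Suc pos"] lenE Suc unfolding E_def[symmetric] by simp
  qed
qed

definition zv :: "nat \<Rightarrow> int \<Rightarrow> int \<Rightarrow> int \<Rightarrow> nat \<Rightarrow> int \<times> int" where
  "zv n c0 \<rho> d k = (if even k then c0 else 1 - c0, (\<rho> + 2 * d * int k) mod (2 * int n))"

definition LL :: "nat \<Rightarrow> nat" where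
  "LL n = (if even n then n else 2 * n)"

lemma zig_cls_even:
  assumes n: "even n" and d: "d = 1 \<or> d = -1"
  shows "(snd (zv n c0 \<rho> d k) - 2 * fst (zv n c0 \<rho> d k)) mod 4 = (\<rho> - 2 * c0) mod 4"
proof -
  define col where "col = (if even k then c0 else 1 - c0)"
  have dv: "(4::int) dvd 2 * int n"
  proof -
    obtain q where "n = 2 * q" using n by auto
    then show ?thesis by simp
  qed
  have "(snd (zv n c0 \<rho> d k) - 2 * fst (zv n c0 \<rho> d k)) mod 4
      = ((\<rho> + 2 * d * int k) mod (2 * int n) - 2 * col) mod 4"
    by (simp add: zv_def col_def)
  also have "\<dots> = ((\<rho> + 2 * d * int k) mod (2 * int n) mod 4 - 2 * col) mod 4"
    by (simp add: mod_diff_left_eq)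
  also have "\<dots> = ((\<rho> + 2 * d * int k) mod 4 - 2 * col) mod 4"
    using dv by (simp add: mod_mod_cancel)
  also have "\<dots> = ((\<rho> + 2 * d * int k) - 2 * col) mod 4"
    by (simp add: mod_diff_left_eq)
  also have "\<dots> = (\<rho> - 2 * c0) mod 4"
  proof -
    obtain t where kt: "k = 2 * t \<or> k = 2 * t + 1" by (metis oddE evenE)
    have "(4::int) dvd ((\<rho> + 2 * d * int k) - 2 * col) - (\<rho> - 2 * c0)"
    proof (cases "even k")
      case True
      then have k: "k = 2 * t" using kt by auto
      have cc: "col = c0" using True by (simp add: col_def)
      have "((\<rho> + 2 * d * int k) - 2 * col) - (\<rho> - 2 * c0) = 4 * (d * int t)"
        unfolding cc k by (simp add: algebra_simps)
      then show ?thesis by (metis dvd_triv_left)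
    next
      case False
      then have k: "k = 2 * t + 1" using kt by auto
      have cc: "col = 1 - c0" using False by (simp add: col_def)
      show ?thesis
      proof (cases "d = 1")
        case True
        then have "((\<rho> + 2 * d * int k) - 2 * col) - (\<rho> - 2 * c0) = 4 * (int t + c0)"
          unfolding cc k by (simp add: algebra_simps)
        then show ?thesis by (metis dvd_triv_left)
      next
        case False': False
        then have "d = -1" using d by simp
        then have "((\<rho> + 2 * d * int k) - 2 * col) - (\<rho> - 2 * c0) = 4 * (c0 - int t - 1)"
          unfolding cc k by (simp add: algebra_simps)
        then show ?thesis by (metis dvd_triv_left)
      qed
    qed
    then show ?thesis by (simp add: mod_eq_dvd_iff)
  qed
  finally show ?thesis .
qed

lemma zig_cls_odd:
  shows "snd (zv n c0 \<rho> d k) mod 2 = \<rho> mod 2"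
proof -
  have "snd (zv n c0 \<rho> d k) mod 2 = (\<rho> + 2 * d * int k) mod (2 * int n) mod 2" by (simp add: zv_def)
  also have "\<dots> = (\<rho> + 2 * d * int k) mod 2"
    by (rule mod_mod_cancel) simp
  also have "\<dots> = \<rho> mod 2"
  proof -
    have "\<rho> + 2 * d * int k = \<rho> + 2 * (d * int k)" by simp
    then show ?thesis by (metis mod_mult_self2 mult.commute)
  qed
  finally show ?thesis .
qed

lemma dvd_small_int:
  assumes "(n::int) dvd x" "\<bar>x\<bar> < n" shows "x = 0"
proof (rule ccontr)
  assume "x \<noteq> 0"
  then have "\<bar>n\<bar> \<le> \<bar>x\<bar>" using assms(1) by (rule dvd_imp_le_int)
  then show False using assms(2) by linarith
qed

lemma zig_dist:
  assumes n: "1 \<le> n" and d: "d = 1 \<or> d = -1" and c0: "c0 = 0 \<or> c0 = 1"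
    and k: "k < LL n" and k': "k' < LL n" and eq: "zv n c0 \<rho> d k = zv n c0 \<rho> d k'"
  shows "k = k'"
proof -
  have par: "even k \<longleftrightarrow> even k'"
    using c0 eq by (elim disjE) (auto simp: zv_def split: if_splits)
  have "(\<rho> + 2 * d * int k) mod (2 * int n) = (\<rho> + 2 * d * int k') mod (2 * int n)"
    using eq by (simp add: zv_def)
  then have "2 * int n dvd (\<rho> + 2 * d * int k) - (\<rho> + 2 * d * int k')"
    by (simp add: mod_eq_dvd_iff)
  then have "2 * int n dvd 2 * (d * (int k - int k'))" by (simp add: algebra_simps)
  then have "int n dvd d * (int k - int k')" by (simp add: mult_dvd_mono)
  then have "int n dvd d * (d * (int k - int k'))" by simp
  moreover have "d * (d * (int k - int k')) = int k - int k'" using d by auto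
  ultimately have nd: "int n dvd int k - int k'" by simp
  show ?thesis
  proof (cases "even n")
    case True
    then have "\<bar>int k - int k'\<bar> < int n" using k k' by (simp add: LL_def)
    then show ?thesis using dvd_small_int[OF nd] by simp
  next
    case False
    obtain y where y: "int k - int k' = int n * y" using nd by (auto simp: dvd_def)
    have "even (int k - int k')" using par by simp
    then have "even (int n * y)" using y by simp
    then have "even y" using False by simp
    then obtain z where "y = 2 * z" by auto
    then have "2 * int n dvd int k - int k'" using y by (simp add: algebra_simps)
    moreover have "\<bar>int k - int k'\<bar> < 2 * int n" using k k' False by (simp add: LL_def)
    ultimately show ?thesis using dvd_small_int by fastforce
  qed
qed

lemma zig_row_hit:
  assumes n: "1 \<le> n" and d: "d = 1 \<or> d = -1" and r: "0 \<le> r" "r < 2 * int n"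
    and e: "even (r - \<rho>)"
  shows "\<exists>k < n. (\<rho> + 2 * d * int k) mod (2 * int n) = r"
proof -
  define t where "t = (r - \<rho>) div 2"
  have rt: "r = \<rho> + 2 * t" using e by (simp add: t_def)
  define k where "k = nat ((d * t) mod int n)"
  have k0: "int k = (d * t) mod int n" using n by (simp add: k_def)
  have "(d * t) mod int n < int n" using n by simp
  then have kn: "k < n" using k0 by linarith
  have "int n dvd int k - d * t" using k0 by (simp add: mod_eq_dvd_iff[symmetric] mod_mod_trivial)
  then have "2 * int n dvd 2 * (int k - d * t)" by (rule mult_dvd_mono[OF dvd_refl])
  then have "2 * int n dvd d * (2 * (int k - d * t))" by simp
  moreover have "d * (2 * (int k - d * t)) = (\<rho> + 2 * d * int k) - r"
    using d rt by (auto simp: algebra_simps)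
  ultimately have "(\<rho> + 2 * d * int k) mod (2 * int n) = r mod (2 * int n)"
    by (simp add: mod_eq_dvd_iff)
  also have "\<dots> = r" using r by simp
  finally show ?thesis using kn by blast
qed

lemma zig_cov:
  assumes n: "1 \<le> n" and d: "d = 1 \<or> d = -1" and c0: "c0 = 0 \<or> c0 = 1"
    and c: "c = 0 \<or> c = 1" and r: "0 \<le> r" "r < 2 * int n"
    and cls: "if even n then (r - 2 * c) mod 4 = (\<rho> - 2 * c0) mod 4 else r mod 2 = \<rho> mod 2"
  shows "\<exists>k < LL n. zv n c0 \<rho> d k = (c, r)"
proof -
  have e: "even (r - \<rho>)"
  proof (cases "even n")
    case True
    then have "(r - 2 * c) mod 4 = (\<rho> - 2 * c0) mod 4" using cls by simp
    then have "(4::int) dvd (r - 2 * c) - (\<rho> - 2 * c0)" by (simp add: mod_eq_dvd_iff)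
    then have "(2::int) dvd (r - 2 * c) - (\<rho> - 2 * c0)" by (rule dvd_trans[rotated]) simp
    then show ?thesis by (simp add: algebra_simps)
  next
    case False
    then have "r mod 2 = \<rho> mod 2" using cls by simp
    then show ?thesis by (simp add: mod_eq_dvd_iff)
  qed
  obtain k where k: "k < n" and row: "(\<rho> + 2 * d * int k) mod (2 * int n) = r"
    using zig_row_hit[OF n d r e] by blast
  show ?thesis
  proof (cases "even n")
    case True
    have "(snd (zv n c0 \<rho> d k) - 2 * fst (zv n c0 \<rho> d k)) mod 4 = (\<rho> - 2 * c0) mod 4"
      using zig_cls_even[OF True d] .
    then have "(r - 2 * fst (zv n c0 \<rho> d k)) mod 4 = (r - 2 * c) mod 4"
      using cls True row by (simp add: zv_def)
    then have "(4::int) dvd 2 * c - 2 * fst (zv n c0 \<rho> d k)"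
      by (simp add: mod_eq_dvd_iff algebra_simps)
    moreover have "fst (zv n c0 \<rho> d k) = 0 \<or> fst (zv n c0 \<rho> d k) = 1" using c0 by (auto simp: zv_def)
    ultimately have "fst (zv n c0 \<rho> d k) = c" using c by auto
    then have "zv n c0 \<rho> d k = (c, r)" using row by (simp add: zv_def prod_eq_iff)
    moreover have "k < LL n" using k True by (simp add: LL_def)
    ultimately show ?thesis by blast
  next
    case False
    have row2: "(\<rho> + 2 * d * int (k + n)) mod (2 * int n) = r"
    proof -
      have "\<rho> + 2 * d * int (k + n) = (\<rho> + 2 * d * int k) + d * (2 * int n)" by (simp add: algebra_simps)
      then show ?thesis using row by (metis mod_mult_self1)
    qed
    have "fst (zv n c0 \<rho> d k) = c \<or> fst (zv n c0 \<rho> d (k + n)) = c"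
      using c c0 False by (auto simp: zv_def)
    moreover have "k < LL n" "k + n < LL n" using k False by (auto simp: LL_def)
    ultimately show ?thesis using row row2 by (metis zv_def prod.collapse snd_conv)
  qed
qed

definition lft :: "vtx \<Rightarrow> vtx \<Rightarrow> bool" where
  "lft p q \<longleftrightarrow> {fst p, fst q} = {2, 3} \<and> \<bar>snd p - snd q\<bar> = 2"

definition rgt :: "nat \<Rightarrow> vtx \<Rightarrow> vtx \<Rightarrow> bool" where
  "rgt m p q \<longleftrightarrow> {fst p, fst q} = {int m - 4, int m - 3} \<and> \<bar>snd p - snd q\<bar> = 2"

definition dlt :: "vtx \<Rightarrow> vtx \<Rightarrow> int" where
  "dlt p q = (if {fst p, fst q} = {2, 3} then -2 else 2)"

definition ddir :: "vtx \<Rightarrow> vtx \<Rightarrow> int" where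
  "ddir p q = (if snd p < snd q then -1 else 1)"

definition Z :: "nat \<Rightarrow> vtx \<Rightarrow> vtx \<Rightarrow> int \<Rightarrow> vtx list" where
  "Z n p q \<epsilon> = map (\<lambda>k. (if even k then fst p + dlt p q else fst q + dlt p q,
                         snd p + \<epsilon> + 2 * ddir p q * int k)) [0..<LL n]"

definition JJ :: "nat \<Rightarrow> vtx \<Rightarrow> vtx \<Rightarrow> int" where
  "JJ n p q = ddir p q * (if even n then 2 else 4)"

definition bet :: "nat \<Rightarrow> nat \<Rightarrow> vtx \<Rightarrow> int \<times> int" where
  "bet m n x = (if fst x \<le> 1 then (fst x, snd x mod (2 * int n))
                else (int m - 1 - fst x, (snd x - int n) mod (2 * int n)))"

definition bandv :: "nat \<Rightarrow> vtx \<Rightarrow> bool" where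
  "bandv m x \<longleftrightarrow> in_strip m x \<and> (fst x \<le> 1 \<or> int m - 2 \<le> fst x)"

definition cls :: "nat \<Rightarrow> nat \<Rightarrow> vtx \<Rightarrow> int" where
  "cls m n x = (if even n then (snd (bet m n x) - 2 * fst (bet m n x)) mod 4 else snd (bet m n x) mod 2)"

definition zc0 :: "nat \<Rightarrow> vtx \<Rightarrow> vtx \<Rightarrow> int" where
  "zc0 m p q = (if lft p q then fst p - 2 else int m - 3 - fst p)"

definition zrho :: "nat \<Rightarrow> nat \<Rightarrow> vtx \<Rightarrow> vtx \<Rightarrow> int \<Rightarrow> int" where
  "zrho m n p q \<epsilon> = (if lft p q then snd p + \<epsilon> else snd p + \<epsilon> - int n)"

definition kap :: "nat \<Rightarrow> nat \<Rightarrow> vtx \<Rightarrow> vtx \<Rightarrow> int \<Rightarrow> int" where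
  "kap m n p q \<epsilon> = (if even n then (zrho m n p q \<epsilon> - 2 * zc0 m p q) mod 4 else zrho m n p q \<epsilon> mod 2)"

lemma LL_even: "even (LL n)" by (simp add: LL_def)

lemma LL_pos2: "1 \<le> n \<Longrightarrow> 2 \<le> LL n"
  by (auto simp: LL_def elim: evenE)

lemma bet_orb:
  assumes n: "1 \<le> n" and m: "4 \<le> m" and x: "bandv m x" and y: "bandv m y"
  shows "orb m n x = orb m n y \<longleftrightarrow> bet m n x = bet m n y"
proof
  assume "orb m n x = orb m n y"
  then obtain j where yj: "y = sigma_pow m n j x" using orb_eq_sigma[OF n] by blast
  obtain a b where xab: "x = (a, b)" by (cases x)
  show "bet m n x = bet m n y"
  proof (cases "even j")
    case True
    then obtain t where j: "j = 2 * t" by auto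
    have y2: "y = (a, b + t * (2 * int n))" using yj True j xab by (simp add: sigma_pow_def algebra_simps)
    have "(b + t * (2 * int n) - int n) mod (2 * int n) = (b - int n) mod (2 * int n)"
    proof -
      have "b + t * (2 * int n) - int n = (b - int n) + t * (2 * int n)" by simp
      then show ?thesis by (metis mod_mult_self1)
    qed
    then show ?thesis unfolding y2 xab bet_def by simp
  next
    case False
    then obtain t where j: "j = 2 * t + 1" by (metis oddE)
    have y2: "y = (int m - 1 - a, b + int n + t * (2 * int n))"
      using yj False j xab by (simp add: sigma_pow_def algebra_simps)
    have "a \<le> 1 \<or> int m - 2 \<le> a" using x xab by (simp add: bandv_def)
    then show ?thesis
    proof
      assume a: "a \<le> 1"
      then have "\<not> int m - 1 - a \<le> 1" using m by simp
      then show ?thesis unfolding y2 xab bet_def using a by simp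
    next
      assume a: "int m - 2 \<le> a"
      then have na: "\<not> a \<le> 1" using m by simp
      have "int m - 1 - a \<le> 1" using a by simp
      moreover have "(b + int n + t * (2 * int n)) mod (2 * int n) = (b - int n) mod (2 * int n)"
      proof -
        have "b + int n + t * (2 * int n) = (b - int n) + (t + 1) * (2 * int n)" by (simp add: algebra_simps)
        then show ?thesis by (metis mod_mult_self1)
      qed
      ultimately show ?thesis unfolding y2 xab bet_def using na by simp
    qed
  qed
next
  assume eq: "bet m n x = bet m n y"
  obtain a b where xab: "x = (a, b)" by (cases x)
  obtain a' b' where yab: "y = (a', b')" by (cases y)
  have ax: "0 \<le> a \<and> a < int m" "a \<le> 1 \<or> int m - 2 \<le> a" using x xab by (auto simp: bandv_def in_strip_def)
  have ay: "0 \<le> a' \<and> a' < int m" "a' \<le> 1 \<or> int m - 2 \<le> a'" using y yab by (auto simp: bandv_def in_strip_def)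
  have key: "\<exists>j. y = sigma_pow m n j x"
  proof (cases "a \<le> 1")
    case True
    show ?thesis
    proof (cases "a' \<le> 1")
      case True': True
      have "a = a'" "b mod (2 * int n) = b' mod (2 * int n)" using eq True True' xab yab by (auto simp: bet_def)
      then obtain t where "b' - b = 2 * int n * t" by (metis mod_eq_dvd_iff dvd_def)
      then have "y = sigma_pow m n (2 * t) x" using \<open>a = a'\<close> xab yab by (simp add: sigma_pow_def algebra_simps)
      then show ?thesis by blast
    next
      case False
      have "a = int m - 1 - a'" "b mod (2 * int n) = (b' - int n) mod (2 * int n)"
        using eq True False xab yab by (auto simp: bet_def)
      then obtain t where "b' - int n - b = 2 * int n * t" by (metis mod_eq_dvd_iff dvd_def)
      then have "y = sigma_pow m n (2 * t + 1) x" using \<open>a = int m - 1 - a'\<close> xab yab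
        by (simp add: sigma_pow_def algebra_simps)
      then show ?thesis by blast
    qed
  next
    case False
    show ?thesis
    proof (cases "a' \<le> 1")
      case True
      have "int m - 1 - a = a'" "(b - int n) mod (2 * int n) = b' mod (2 * int n)"
        using eq True False xab yab by (auto simp: bet_def)
      then obtain t where "b' - (b - int n) = 2 * int n * t" by (metis mod_eq_dvd_iff dvd_def)
      then have "y = sigma_pow m n (2 * t - 1) x" using \<open>int m - 1 - a = a'\<close> xab yab
        by (simp add: sigma_pow_def algebra_simps)
      then show ?thesis by blast
    next
      case False': False
      have "a = a'" "(b - int n) mod (2 * int n) = (b' - int n) mod (2 * int n)"
        using eq False False' xab yab by (auto simp: bet_def)
      then obtain t where "(b' - int n) - (b - int n) = 2 * int n * t" by (metis mod_eq_dvd_iff dvd_def)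
      then have "y = sigma_pow m n (2 * t) x" using \<open>a = a'\<close> xab yab by (simp add: sigma_pow_def algebra_simps)
      then show ?thesis by blast
    qed
  qed
  then show "orb m n x = orb m n y" using orb_sigma[OF n] by metis
qed


lemma lft_facts:
  assumes "lft p q"
  shows "dlt p q = -2" "fst p + fst q = 5" "fst p = 2 \<or> fst p = 3" "snd p - snd q = 2 * ddir p q"
  using assms unfolding lft_def dlt_def ddir_def by (auto simp: doubleton_eq_iff)

lemma rgt_facts:
  assumes "rgt m p q" "7 \<le> m"
  shows "dlt p q = 2" "fst p + fst q = 2 * int m - 7" "fst p = int m - 4 \<or> fst p = int m - 3"
    "snd p - snd q = 2 * ddir p q" "\<not> lft p q"
  using assms unfolding rgt_def dlt_def ddir_def lft_def by (auto simp: doubleton_eq_iff)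

lemma ddir_cases: "ddir p q = 1 \<or> ddir p q = -1"
  by (simp add: ddir_def)

lemma Z_len: "length (Z n p q \<epsilon>) = LL n"
  by (simp add: Z_def)

lemma Z_nth: "k < LL n \<Longrightarrow> Z n p q \<epsilon> ! k =
   (if even k then fst p + dlt p q else fst q + dlt p q, snd p + \<epsilon> + 2 * ddir p q * int k)"
  by (simp add: Z_def)

lemma Z_bet:
  assumes m: "7 \<le> m" and E: "lft p q \<or> rgt m p q" and k: "k < LL n"
  shows "bet m n (Z n p q \<epsilon> ! k) = zv n (zc0 m p q) (zrho m n p q \<epsilon>) (ddir p q) k"
  using E
proof
  assume L: "lft p q"
  note f = lft_facts[OF L]
  have c: "(if even k then fst p + dlt p q else fst q + dlt p q) \<le> 1" using f by auto
  show ?thesis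
    unfolding Z_nth[OF k] bet_def zv_def zc0_def zrho_def using c L f
    by (auto simp: algebra_simps)
next
  assume R: "rgt m p q"
  note f = rgt_facts[OF R m]
  have c: "\<not> (if even k then fst p + dlt p q else fst q + dlt p q) \<le> 1" using f m by auto
  show ?thesis
    unfolding Z_nth[OF k] bet_def zv_def zc0_def zrho_def using c f
    by (auto simp: algebra_simps)
qed

lemma Z_band:
  assumes m: "7 \<le> m" and E: "lft p q \<or> rgt m p q" and z: "z \<in> set (Z n p q \<epsilon>)"
  shows "bandv m z"
proof -
  obtain k where k: "k < LL n" and zk: "z = Z n p q \<epsilon> ! k" using z by (metis Z_len in_set_conv_nth)
  show ?thesis using E
  proof
    assume L: "lft p q"
    note f = lft_facts[OF L]
    show ?thesis unfolding zk Z_nth[OF k] bandv_def in_strip_def using f m by auto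
  next
    assume R: "rgt m p q"
    note f = rgt_facts[OF R m]
    show ?thesis unfolding zk Z_nth[OF k] bandv_def in_strip_def using f m by auto
  qed
qed

lemma Z_ne: "1 \<le> n \<Longrightarrow> Z n p q \<epsilon> \<noteq> []"
  using LL_pos2[of n] by (auto simp: Z_def)

lemma Z_adj_first:
  assumes n: "1 \<le> n" and m: "7 \<le> m" and E: "lft p q \<or> rgt m p q" and e: "\<epsilon> = 1 \<or> \<epsilon> = -1"
  shows "knight_adj p (hd (Z n p q \<epsilon>))"
proof -
  have k: "0 < LL n" using LL_pos2[OF n] by simp
  have h: "hd (Z n p q \<epsilon>) = (fst p + dlt p q, snd p + \<epsilon>)"
    using Z_nth[OF k] Z_ne[OF n] by (simp add: hd_conv_nth)
  have "dlt p q = 2 \<or> dlt p q = -2" by (simp add: dlt_def)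
  then show ?thesis unfolding h knight_adj_iff using e by auto
qed

lemma Z_succ:
  assumes m: "7 \<le> m" and E: "lft p q \<or> rgt m p q"
  shows "successively knight_adj (Z n p q \<epsilon>)"
proof -
  have d1: "\<bar>fst p - fst q\<bar> = 1"
    using E
  proof
    assume L: "lft p q" show ?thesis using lft_facts(2,3)[OF L] by auto
  next
    assume R: "rgt m p q" show ?thesis using rgt_facts(2,3)[OF R m] by auto
  qed
  show ?thesis unfolding successively_conv_nth
  proof (intro allI impI)
    fix i assume i: "Suc i < length (Z n p q \<epsilon>)"
    then have i1: "i < LL n" "Suc i < LL n" by (auto simp: Z_len)
    have "\<bar>2 * ddir p q\<bar> = 2" using ddir_cases[of p q] by auto
    then show "knight_adj (Z n p q \<epsilon> ! i) (Z n p q \<epsilon> ! Suc i)"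
      unfolding Z_nth[OF i1(1)] Z_nth[OF i1(2)] knight_adj_iff using d1
      by (auto simp: algebra_simps abs_minus_commute)
  qed
qed


lemma JJ_even: "even (JJ n p q)" by (simp add: JJ_def)

lemma JJ_n: "JJ n p q * int n = 2 * ddir p q * int (LL n)"
  by (simp add: JJ_def LL_def)

lemma Z_adj_last:
  assumes n: "1 \<le> n" and m: "7 \<le> m" and E: "lft p q \<or> rgt m p q" and e: "\<epsilon> = 1 \<or> \<epsilon> = -1"
  shows "knight_adj (last (Z n p q \<epsilon>)) (sigma_pow m n (JJ n p q) q)"
proof -
  define L where "L = LL n"
  have L2: "2 \<le> L" using LL_pos2[OF n] by (simp add: L_def)
  have k: "L - 1 < LL n" using L2 by (simp add: L_def)
  have odd: "\<not> even (L - 1)" using LL_even[of n] L2 by (simp add: L_def)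
  have l: "last (Z n p q \<epsilon>) = Z n p q \<epsilon> ! (L - 1)"
    using Z_ne[OF n] by (simp add: last_conv_nth Z_len L_def)
  have l2: "last (Z n p q \<epsilon>) = (fst q + dlt p q, snd p + \<epsilon> + 2 * ddir p q * int (L - 1))"
    unfolding l Z_nth[OF k] using odd by simp
  have sq: "sigma_pow m n (JJ n p q) q = (fst q, snd q + 2 * ddir p q * int L)"
    using sigma_pow_even[OF JJ_even] JJ_n by (simp add: L_def)
  have sd: "snd p - snd q = 2 * ddir p q"
    using E lft_facts(4) rgt_facts(4)[OF _ m] by blast
  have iL: "int (L - 1) = int L - 1" using L2 by simp
  have "snd p + \<epsilon> + 2 * ddir p q * int (L - 1) - (snd q + 2 * ddir p q * int L) = \<epsilon>"
    using sd iL by (simp add: algebra_simps)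
  moreover have "dlt p q = 2 \<or> dlt p q = -2" by (simp add: dlt_def)
  ultimately show ?thesis unfolding l2 sq knight_adj_iff using e by auto
qed

lemma zc0_01:
  assumes m: "7 \<le> m" and E: "lft p q \<or> rgt m p q"
  shows "zc0 m p q = 0 \<or> zc0 m p q = 1"
  using E
proof
  assume L: "lft p q" show ?thesis using lft_facts(3)[OF L] L by (auto simp: zc0_def)
next
  assume R: "rgt m p q" show ?thesis using rgt_facts(3,5)[OF R m] by (auto simp: zc0_def)
qed

lemma Z_dist:
  assumes n: "1 \<le> n" and m: "7 \<le> m" and E: "lft p q \<or> rgt m p q"
  shows "distinct (map (orb m n) (Z n p q \<epsilon>))"
  unfolding distinct_conv_nth
proof (intro allI impI)
  fix i j assume i: "i < length (map (orb m n) (Z n p q \<epsilon>))" and j: "j < length (map (orb m n) (Z n p q \<epsilon>))"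
    and ij: "i \<noteq> j"
  have i': "i < LL n" and j': "j < LL n" using i j by (auto simp: Z_len)
  have "Z n p q \<epsilon> ! i \<in> set (Z n p q \<epsilon>)" "Z n p q \<epsilon> ! j \<in> set (Z n p q \<epsilon>)"
    using i' j' by (simp_all add: Z_len)
  then have bi: "bandv m (Z n p q \<epsilon> ! i)" and bj: "bandv m (Z n p q \<epsilon> ! j)"
    using Z_band[OF m E] by auto
  show "map (orb m n) (Z n p q \<epsilon>) ! i \<noteq> map (orb m n) (Z n p q \<epsilon>) ! j"
  proof
    assume "map (orb m n) (Z n p q \<epsilon>) ! i = map (orb m n) (Z n p q \<epsilon>) ! j"
    then have "orb m n (Z n p q \<epsilon> ! i) = orb m n (Z n p q \<epsilon> ! j)" using i' j' by (simp add: Z_len)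
    then have "bet m n (Z n p q \<epsilon> ! i) = bet m n (Z n p q \<epsilon> ! j)"
      using bet_orb[OF n _ bi bj] m by simp
    then have "zv n (zc0 m p q) (zrho m n p q \<epsilon>) (ddir p q) i = zv n (zc0 m p q) (zrho m n p q \<epsilon>) (ddir p q) j"
      using Z_bet[OF m E i'] Z_bet[OF m E j'] by simp
    then have "i = j" using zig_dist[OF n ddir_cases zc0_01[OF m E] i' j'] by blast
    then show False using ij by simp
  qed
qed

lemma Z_cls:
  assumes m: "7 \<le> m" and E: "lft p q \<or> rgt m p q" and z: "z \<in> set (Z n p q \<epsilon>)"
  shows "cls m n z = kap m n p q \<epsilon>"
proof -
  obtain k where k: "k < LL n" and zk: "z = Z n p q \<epsilon> ! k" using z by (metis Z_len in_set_conv_nth)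
  have b: "bet m n z = zv n (zc0 m p q) (zrho m n p q \<epsilon>) (ddir p q) k" using Z_bet[OF m E k] zk by simp
  show ?thesis
  proof (cases "even n")
    case True
    then show ?thesis unfolding cls_def kap_def b using zig_cls_even[OF True ddir_cases] by simp
  next
    case False
    then show ?thesis unfolding cls_def kap_def b using zig_cls_odd by simp
  qed
qed

lemma bet_range:
  assumes n: "1 \<le> n" and m: "4 \<le> m" and v: "bandv m v"
  shows "(fst (bet m n v) = 0 \<or> fst (bet m n v) = 1) \<and> 0 \<le> snd (bet m n v) \<and> snd (bet m n v) < 2 * int n"
  using v n m unfolding bandv_def in_strip_def bet_def by auto

lemma Z_cov:
  assumes n: "1 \<le> n" and m: "7 \<le> m" and E: "lft p q \<or> rgt m p q"
    and v: "bandv m v" and c: "cls m n v = kap m n p q \<epsilon>"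
  shows "\<exists>z\<in>set (Z n p q \<epsilon>). orb m n z = orb m n v"
proof -
  obtain c r where cr: "bet m n v = (c, r)" by (cases "bet m n v")
  have rng: "c = 0 \<or> c = 1" "0 \<le> r" "r < 2 * int n" using bet_range[OF n _ v] m cr by auto
  have cl: "if even n then (r - 2 * c) mod 4 = (zrho m n p q \<epsilon> - 2 * zc0 m p q) mod 4
            else r mod 2 = zrho m n p q \<epsilon> mod 2"
    using c cr unfolding cls_def kap_def by (simp split: if_splits)
  obtain k where k: "k < LL n" and zk: "zv n (zc0 m p q) (zrho m n p q \<epsilon>) (ddir p q) k = (c, r)"
    using zig_cov[OF n ddir_cases zc0_01[OF m E] rng cl] by blast
  have "bet m n (Z n p q \<epsilon> ! k) = bet m n v" using Z_bet[OF m E k] zk cr by simp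
  moreover have "Z n p q \<epsilon> ! k \<in> set (Z n p q \<epsilon>)" using k by (simp add: Z_len)
  then have "bandv m (Z n p q \<epsilon> ! k)" using Z_band[OF m E] by blast
  ultimately have "orb m n (Z n p q \<epsilon> ! k) = orb m n v" using bet_orb[OF n _ _ v] m by simp
  moreover have "Z n p q \<epsilon> ! k \<in> set (Z n p q \<epsilon>)" using k by (simp add: Z_len)
  ultimately show ?thesis by blast
qed

lemma kap_even_flip:
  assumes "even n"
  shows "kap m n p q (-1) = (kap m n p q 1 + 2) mod 4"
proof -
  have z: "zrho m n p q (-1) = zrho m n p q 1 - 2" by (simp add: zrho_def)
  have "kap m n p q (-1) = ((zrho m n p q 1 - 2 * zc0 m p q) - 2) mod 4"
    using assms unfolding kap_def z by (simp add: algebra_simps)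
  also have "\<dots> = ((zrho m n p q 1 - 2 * zc0 m p q) + 2) mod 4"
  proof -
    have eq: "(zrho m n p q 1 - 2 * zc0 m p q) - 2 = ((zrho m n p q 1 - 2 * zc0 m p q) + 2) + (-1) * 4" by simp
    show ?thesis by (subst eq) (rule mod_mult_self1)
  qed
  also have "\<dots> = (kap m n p q 1 + 2) mod 4" using assms by (simp add: kap_def mod_add_left_eq)
  finally show ?thesis .
qed

lemma kap_par_even:
  assumes "even n" "\<epsilon> = 1 \<or> \<epsilon> = -1"
  shows "kap m n p q \<epsilon> mod 2 = (snd p + 1) mod 2"
proof -
  have "kap m n p q \<epsilon> mod 2 = (zrho m n p q \<epsilon> - 2 * zc0 m p q) mod 2"
    using assms(1) by (simp add: kap_def mod_mod_cancel)
  also have "\<dots> = zrho m n p q \<epsilon> mod 2"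
  proof -
    have eq: "zrho m n p q \<epsilon> - 2 * zc0 m p q = zrho m n p q \<epsilon> + (- zc0 m p q) * 2" by simp
    show ?thesis by (subst eq) (rule mod_mult_self1)
  qed
  also have "\<dots> = (snd p + 1) mod 2"
  proof -
    obtain t' where "n = 2 * t'" using assms(1) by (metis evenE)
    then obtain t where n: "int n = 2 * t" by (intro that[of "int t'"]) simp
    have eq: "zrho m n p q \<epsilon> = (snd p + 1) + ((if \<epsilon> = 1 then 0 else -1) + (if lft p q then 0 else - t)) * 2"
      using assms(2) n by (auto simp: zrho_def algebra_simps)
    show ?thesis by (subst eq) (rule mod_mult_self1)
  qed
  finally show ?thesis .
qed

lemma kap_range_even: "even n \<Longrightarrow> 0 \<le> kap m n p q \<epsilon> \<and> kap m n p q \<epsilon> < 4"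
  by (simp add: kap_def)

lemma kap_odd:
  assumes "odd n" "\<epsilon> = 1 \<or> \<epsilon> = -1"
  shows "kap m n p q \<epsilon> = (if lft p q then (snd p + 1) mod 2 else snd p mod 2)"
proof -
  obtain t' where "n = 2 * t' + 1" using assms(1) by (metis oddE)
  then obtain t where n: "int n = 2 * t + 1" by (intro that[of "int t'"]) simp
  have eq: "zrho m n p q \<epsilon> = (if lft p q then snd p + 1 else snd p) + ((if \<epsilon> = 1 then 0 else -1) + (if lft p q then 0 else - t)) * 2"
    using assms(2) n by (auto simp: zrho_def algebra_simps)
  have "zrho m n p q \<epsilon> mod 2 = (if lft p q then snd p + 1 else snd p) mod 2"
    by (subst eq) (rule mod_mult_self1)
  then show ?thesis using assms(1) unfolding kap_def by simp
qed

lemma cls_range: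
  assumes n: "1 \<le> n"
  shows "if even n then 0 \<le> cls m n v \<and> cls m n v < 4 else 0 \<le> cls m n v \<and> cls m n v < 2"
  by (simp add: cls_def)

lemma orb_iota: "orb (K + 4) n (iota x) = iota (orb K n x)"
  by (simp add: orb_def iota_def)

lemma sigma_iota: "sigma_pow (K + 4) n j (iota x) = iota (sigma_pow K n j x)"
  by (simp add: sigma_pow_def iota_def)

lemma knight_adj_iota: "knight_adj (iota p) (iota q) \<longleftrightarrow> knight_adj p q"
  by (simp add: knight_adj_def iota_def)

lemma inj_iota: "inj iota"
  by (rule injI) (auto simp: iota_def prod_eq_iff)

lemma iota_strip:
  assumes "in_strip K x"
  shows "in_strip (K + 4) (iota x) \<and> 2 \<le> fst (iota x) \<and> fst (iota x) \<le> int (K + 4) - 3"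
  using assms by (simp add: in_strip_def iota_def)

lemma orb_band_disj:
  assumes m: "4 \<le> m" and x: "bandv m x" and y1: "2 \<le> fst y" and y2: "fst y \<le> int m - 3"
  shows "orb m n x \<noteq> orb m n y"
proof -
  have "fst (orb m n x) \<le> 1 \<or> int m - 2 \<le> fst (orb m n x)"
    using x by (auto simp: orb_def bandv_def)
  moreover have "2 \<le> fst (orb m n y) \<and> fst (orb m n y) \<le> int m - 3"
    using y1 y2 by (auto simp: orb_def)
  ultimately show ?thesis using m by auto
qed

lemma distinct_concat_map:
  assumes "distinct xs" and "\<forall>i\<in>set xs. distinct (map f (P i))"
    and "\<forall>i\<in>set xs. \<forall>j\<in>set xs. i \<noteq> j \<longrightarrow> f ` set (P i) \<inter> f ` set (P j) = {}"
  shows "distinct (map f (concat (map P xs)))"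
  using assms
proof (induction xs)
  case Nil
  then show ?case by simp
next
  case (Cons x xs)
  have "f ` set (P x) \<inter> f ` set (concat (map P xs)) = {}"
  proof (rule ccontr)
    assume "f ` set (P x) \<inter> f ` set (concat (map P xs)) \<noteq> {}"
    then obtain a b j where a: "a \<in> set (P x)" and j: "j \<in> set xs" and b: "b \<in> set (P j)" and ab: "f a = f b"
      by auto
    have "x \<noteq> j" using Cons.prems(1) j by auto
    then have "f ` set (P x) \<inter> f ` set (P j) = {}" using Cons.prems(3) j by simp
    then show False using a b ab by auto
  qed
  then show ?case using Cons by (auto simp: image_Un)
qed

lemma set_dets: "y \<in> set (dets P i k) \<longleftrightarrow> (\<exists>t\<in>{i..<i + k}. y \<in> set (P t))"
  by (auto simp: dets_def)


lemma core:
  assumes n: "1 \<le> n" and K: "3 \<le> K" and cy: "cycc K n c w"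
    and m: "m = K + 4" and u: "u = map iota w"
    and dis: "distinct is"
    and E: "\<forall>i\<in>set is. Suc i < length u \<and> (lft (u!i) (u!Suc i) \<or> rgt m (u!i) (u!Suc i))"
    and eps: "\<forall>i\<in>set is. eps i = 1 \<or> eps i = -1"
    and inj: "\<forall>i\<in>set is. \<forall>j\<in>set is. kap m n (u!i) (u!Suc i) (eps i) = kap m n (u!j) (u!Suc j) (eps j) \<longrightarrow> i = j"
    and sur: "\<forall>v. bandv m v \<longrightarrow> (\<exists>i\<in>set is. cls m n v = kap m n (u!i) (u!Suc i) (eps i))"
    and sm: "sum_list (map (\<lambda>i. ddir (u!i) (u!Suc i)) is) = 0"
  shows "\<exists>w'. cycc m n c w' \<and> (\<forall>i\<in>set is. \<exists>pos s'. even s' \<and> Suc pos < length w' \<and>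
           w' ! pos = sigma_pow m n s' (Z n (u!i) (u!Suc i) (eps i) ! 0) \<and>
           w' ! Suc pos = sigma_pow m n s' (Z n (u!i) (u!Suc i) (eps i) ! 1))"
proof -
  have m7: "7 \<le> m" using m K by simp
  define Pf where "Pf i = (if i \<in> set is then Z n (u!i) (u!Suc i) (eps i) else [])" for i
  define Jf where "Jf i = (if i \<in> set is then JJ n (u!i) (u!Suc i) else 0)" for i
  define w' where "w' = expand m n Pf Jf 0 0 u"
  define N where "N = length u - 1"
  have lenw: "2 \<le> length w" using cy by (simp add: cycc_def)
  have lenu: "length u = length w" using u by simp
  have Nb: "length (butlast u) = N" by (simp add: N_def)
  have uN: "u = butlast u @ [last u]" using lenu lenw by (metis append_butlast_last_id list.size(3) not_numeral_le_zero)
  have isN: "\<forall>i\<in>set is. i < N" using E by (auto simp: N_def)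
  have PN: "Pf (0 + length (butlast u)) = []" using isN Nb by (auto simp: Pf_def)
  have w'eq: "w' = expand m n Pf Jf 0 0 (butlast u) @ [sigma_pow m n (0 + sum Jf {0..<0 + length (butlast u)}) (last u)]"
  proof -
    have "w' = expand m n Pf Jf 0 0 (butlast u @ [last u])" unfolding w'_def by (rule arg_cong[OF uN])
    also have "\<dots> = expand m n Pf Jf 0 0 (butlast u) @ [sigma_pow m n (0 + sum Jf {0..<0 + length (butlast u)}) (last u)]"
      by (rule expand_append_last[where P=Pf and i=0 and xs="butlast u", OF PN])
    finally show ?thesis .
  qed
  have sumJ: "sum Jf {0..<N} = 0"
  proof -
    have "sum Jf {0..<N} = sum (\<lambda>i. JJ n (u!i) (u!Suc i)) ({0..<N} \<inter> set is)"
      by (simp add: sum.inter_restrict Jf_def)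
    also have "{0..<N} \<inter> set is = set is" using isN by auto
    also have "sum (\<lambda>i. JJ n (u!i) (u!Suc i)) (set is) = (if even n then 2 else 4) * sum (\<lambda>i. ddir (u!i) (u!Suc i)) (set is)"
      by (simp add: JJ_def sum_distrib_left mult.commute)
    also have "sum (\<lambda>i. ddir (u!i) (u!Suc i)) (set is) = 0"
      using sm dis by (simp add: sum_list_distinct_conv_sum_set)
    finally show ?thesis by simp
  qed
  have bl: "butlast w' = expand m n Pf Jf 0 0 (butlast u)" using w'eq by simp
  have lst: "last w' = last u" using w'eq sumJ Nb by simp
  have hdu: "hd w' = hd u"
  proof -
    have "u \<noteq> []" using lenu lenw by auto
    then show ?thesis unfolding w'_def by (simp add: hd_expand)
  qed
  have lastu: "last u = sigma_pow m n c (hd u)"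
  proof -
    have ne: "w \<noteq> []" using lenw by auto
    have "last w = sigma_pow K n c (hd w)" using cy by (simp add: cycc_def)
    then show ?thesis using ne u m by (simp add: last_map hd_map sigma_iota)
  qed
  have Eis: "lft (u!i) (u!Suc i) \<or> rgt m (u!i) (u!Suc i)" if "i \<in> set is" for i using E that by blast
  have epsi: "eps i = 1 \<or> eps i = -1" if "i \<in> set is" for i using eps that by blast
  have stripu: "\<forall>x\<in>set u. in_strip m x \<and> 2 \<le> fst x \<and> fst x \<le> int m - 3"
    using cy iota_strip u m by (auto simp: cycc_def)
  have Pband: "bandv m z" if zP: "z \<in> set (Pf i)" for z i
  proof -
    have ii: "i \<in> set is" using zP by (auto simp: Pf_def split: if_splits)
    then have "z \<in> set (Z n (u!i) (u!Suc i) (eps i))" using zP by (simp add: Pf_def)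
    then show ?thesis by (rule Z_band[OF m7 Eis[OF ii]])
  qed
  have len': "2 \<le> length w'" unfolding w'_def using length_expand[of m n Pf Jf 0 0 u] lenu lenw by simp
  have strip': "\<forall>x\<in>set w'. in_strip m x"
  proof
    fix x assume "x \<in> set w'"
    then obtain j y where xy: "x = sigma_pow m n j y" and y: "y \<in> set u \<or> y \<in> set (dets Pf 0 (length u))"
      unfolding w'_def using set_expand by blast
    have "in_strip m y"
      using y
    proof
      assume "y \<in> set u" then show ?thesis using stripu by auto
    next
      assume "y \<in> set (dets Pf 0 (length u))"
      then obtain t where "y \<in> set (Pf t)" using set_dets by blast
      then have "bandv m y" by (rule Pband)
      then show ?thesis by (simp add: bandv_def)
    qed
    then show "in_strip m x" using xy in_strip_sigma by simp
  qed
  have succ': "successively knight_adj w'"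
    unfolding w'_def
  proof (rule successively_expand)
    show "successively knight_adj u"
      using cy u by (simp add: cycc_def successively_map knight_adj_iota)
  next
    fix k assume "k < length u" "Pf (0 + k) = []"
    then show "Jf (0 + k) = 0" using Z_ne[OF n] by (auto simp: Pf_def Jf_def split: if_splits)
  next
    fix k assume k: "k < length u" "Pf (0 + k) \<noteq> []"
    then have ki: "k \<in> set is" by (auto simp: Pf_def split: if_splits)
    then show "Suc k < length u \<and> knight_adj (u ! k) (hd (Pf (0 + k))) \<and> successively knight_adj (Pf (0 + k)) \<and>
            knight_adj (last (Pf (0 + k))) (sigma_pow m n (Jf (0 + k)) (u ! Suc k))"
      using E Z_adj_first[OF n m7 Eis[OF ki] epsi[OF ki]] Z_succ[OF m7 Eis[OF ki]]
        Z_adj_last[OF n m7 Eis[OF ki] epsi[OF ki]]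
      by (simp add: Pf_def Jf_def)
  qed
  have orbs: "\<And>j x. orb m n (sigma_pow m n j x) = orb m n x" using orb_sigma[OF n] by blast
  have ms: "mset (map (orb m n) (butlast w')) = mset (map (orb m n) (butlast u)) + mset (map (orb m n) (dets Pf 0 N))"
    unfolding bl using mset_expand[of "orb m n" m n Pf Jf 0 0 "butlast u", OF orbs] Nb by simp
  have du: "distinct (map (orb m n) (butlast u))"
  proof -
    have "map (orb m n) (butlast u) = map iota (map (orb K n) (butlast w))"
      using u m by (simp add: map_butlast[symmetric] orb_iota)
    moreover have "distinct (map (orb K n) (butlast w))" using cy by (simp add: cycc_def)
    moreover have "distinct (map iota xs)" if "distinct xs" for xs :: "vtx list"
      using that inj_iota by (simp add: distinct_map inj_on_subset[OF inj_iota])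
    ultimately show ?thesis by metis
  qed
  have dd: "distinct (map (orb m n) (dets Pf 0 N))"
    unfolding dets_def
  proof (rule distinct_concat_map)
    show "distinct [0..<0 + N]" by simp
  next
    show "\<forall>i\<in>set [0..<0 + N]. distinct (map (orb m n) (Pf i))"
      using Z_dist[OF n m7 Eis] by (auto simp: Pf_def)
  next
    show "\<forall>i\<in>set [0..<0 + N]. \<forall>j\<in>set [0..<0 + N]. i \<noteq> j \<longrightarrow>
            orb m n ` set (Pf i) \<inter> orb m n ` set (Pf j) = {}"
    proof (intro ballI impI)
      fix i j :: nat assume ij: "i \<noteq> j"
      show "orb m n ` set (Pf i) \<inter> orb m n ` set (Pf j) = {}"
      proof (rule ccontr)
        assume "orb m n ` set (Pf i) \<inter> orb m n ` set (Pf j) \<noteq> {}"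
        then obtain a b where a: "a \<in> set (Pf i)" and b: "b \<in> set (Pf j)" and ab: "orb m n a = orb m n b"
          by blast
        have ii: "i \<in> set is" and jj: "j \<in> set is" using a b by (auto simp: Pf_def split: if_splits)
        have "bet m n a = bet m n b" using ab bet_orb[OF n _ Pband[OF a] Pband[OF b]] m7 by simp
        then have "cls m n a = cls m n b" by (simp add: cls_def)
        moreover have "cls m n a = kap m n (u!i) (u!Suc i) (eps i)"
          using Z_cls[OF m7 Eis[OF ii]] a ii by (simp add: Pf_def)
        moreover have "cls m n b = kap m n (u!j) (u!Suc j) (eps j)"
          using Z_cls[OF m7 Eis[OF jj]] b jj by (simp add: Pf_def)
        ultimately have "i = j" using inj ii jj by simp
        then show False using ij by simp
      qed
    qed
  qed
  have disj: "set (map (orb m n) (butlast u)) \<inter> set (map (orb m n) (dets Pf 0 N)) = {}"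
  proof (rule ccontr)
    assume "set (map (orb m n) (butlast u)) \<inter> set (map (orb m n) (dets Pf 0 N)) \<noteq> {}"
    then obtain a b where a: "a \<in> set (butlast u)" and b: "b \<in> set (dets Pf 0 N)" and ab: "orb m n b = orb m n a"
      by force
    have "a \<in> set u" using a by (meson in_set_butlastD)
    then have a2: "2 \<le> fst a" "fst a \<le> int m - 3" using stripu by auto
    obtain t where "b \<in> set (Pf t)" using b set_dets by blast
    then have "bandv m b" by (rule Pband)
    then show False using orb_band_disj[OF _ _ a2] ab m7 by simp
  qed
  have dist': "distinct (map (orb m n) (butlast w'))"
  proof -
    have "distinct (map (orb m n) (butlast u) @ map (orb m n) (dets Pf 0 N))"
      using du dd disj by simp
    moreover have "mset (map (orb m n) (butlast w')) = mset (map (orb m n) (butlast u) @ map (orb m n) (dets Pf 0 N))"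
      using ms by simp
    ultimately show ?thesis using mset_eq_imp_distinct_iff by blast
  qed
  have setw': "orb m n ` set (butlast w') = orb m n ` set (butlast u) \<union> orb m n ` set (dets Pf 0 N)"
  proof -
    have "set (map (orb m n) (butlast w')) = set (map (orb m n) (butlast u) @ map (orb m n) (dets Pf 0 N))"
      using ms by (metis mset_append mset_eq_setD)
    then show ?thesis by simp
  qed
  have cov': "\<forall>v. in_strip m v \<longrightarrow> orb m n v \<in> orb m n ` set (butlast w')"
  proof (intro allI impI)
    fix v assume v: "in_strip m v"
    show "orb m n v \<in> orb m n ` set (butlast w')"
    proof (cases "bandv m v")
      case True
      then obtain i where ii: "i \<in> set is" and ci: "cls m n v = kap m n (u!i) (u!Suc i) (eps i)"
        using sur by blast
      obtain z where z: "z \<in> set (Z n (u!i) (u!Suc i) (eps i))" and oz: "orb m n z = orb m n v"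
        using Z_cov[OF n m7 Eis[OF ii] True ci] by blast
      have "z \<in> set (dets Pf 0 N)" using z ii isN set_dets[of z Pf 0 N] by (auto simp: Pf_def)
      then show ?thesis using oz setw' by (metis UnI2 image_eqI)
    next
      case False
      then have c: "2 \<le> fst v" "fst v \<le> int m - 3" using v by (auto simp: bandv_def in_strip_def)
      define v0 where "v0 = (fst v - 2, snd v)"
      have vv: "v = iota v0" by (simp add: v0_def iota_def)
      have "in_strip K v0" using c m by (simp add: v0_def in_strip_def)
      then have "orb K n v0 \<in> orb K n ` set (butlast w)" using cy unfolding cycc_def by blast
      then obtain x where x: "x \<in> set (butlast w)" and ox: "orb K n v0 = orb K n x" by auto
      have "iota x \<in> set (butlast u)" using x u by (simp add: map_butlast[symmetric])
      moreover have "orb m n (iota x) = orb m n v" using ox vv m by (simp add: orb_iota)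
      ultimately show ?thesis using setw' by (metis UnI1 image_eqI)
    qed
  qed
  have cyc': "cycc m n c w'"
    unfolding cycc_def using len' strip' succ' dist' cov' lst lastu hdu by simp
  have pos: "\<forall>i\<in>set is. \<exists>pos s'. even s' \<and> Suc pos < length w' \<and>
           w' ! pos = sigma_pow m n s' (Z n (u!i) (u!Suc i) (eps i) ! 0) \<and>
           w' ! Suc pos = sigma_pow m n s' (Z n (u!i) (u!Suc i) (eps i) ! 1)"
  proof
    fix i assume ii: "i \<in> set is"
    have k: "i < length u" using E ii by auto
    have l2: "2 \<le> length (Pf (0 + i))" using ii LL_pos2[OF n] by (simp add: Pf_def Z_len)
    have ev: "\<And>t. even (Jf t)" by (simp add: Jf_def JJ_even)
    show "\<exists>pos s'. even s' \<and> Suc pos < length w' \<and>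
           w' ! pos = sigma_pow m n s' (Z n (u!i) (u!Suc i) (eps i) ! 0) \<and>
           w' ! Suc pos = sigma_pow m n s' (Z n (u!i) (u!Suc i) (eps i) ! 1)"
      using expand_pos[where m=m and n=n and P=Pf and J=Jf and i=0 and s=0 and xs=u and k=i, OF k l2 _ ev] ii
      unfolding w'_def by (simp add: Pf_def)
  qed
  show ?thesis using cyc' pos by blast
qed

lemma newedge:
  assumes n: "1 \<le> n" and m: "7 \<le> m" and E: "lft p q \<or> rgt m p q" and e: "\<epsilon> = 1 \<or> \<epsilon> = -1"
    and s: "even s"
    and p': "p' = iota (sigma_pow m n s (Z n p q \<epsilon> ! 0))"
    and q': "q' = iota (sigma_pow m n s (Z n p q \<epsilon> ! 1))"
  shows "(lft p q \<longrightarrow> lft p' q') \<and> (rgt m p q \<longrightarrow> rgt (m + 4) p' q') \<and>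
         ddir p' q' = - ddir p q \<and> (even (snd p') \<longleftrightarrow> odd (snd p))"
proof -
  have L2: "2 \<le> LL n" using LL_pos2[OF n] .
  have z0: "Z n p q \<epsilon> ! 0 = (fst p + dlt p q, snd p + \<epsilon>)" using Z_nth[of 0 n] L2 by simp
  have z1: "Z n p q \<epsilon> ! 1 = (fst q + dlt p q, snd p + \<epsilon> + 2 * ddir p q)" using Z_nth[of 1 n] L2 by simp
  have P: "p' = (fst p + dlt p q + 2, snd p + \<epsilon> + s * int n)"
    unfolding p' z0 using sigma_pow_even[OF s] by (simp add: iota_def)
  have Q: "q' = (fst q + dlt p q + 2, snd p + \<epsilon> + 2 * ddir p q + s * int n)"
    unfolding q' z1 using sigma_pow_even[OF s] by (simp add: iota_def)
  have sd: "snd p - snd q = 2 * ddir p q" using E lft_facts(4) rgt_facts(4)[OF _ m] by blast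
  have dd: "ddir p' q' = - ddir p q"
    using ddir_cases[of p q] unfolding P Q ddir_def by auto
  have ev: "even (s * int n)" using s by simp
  have par: "even (snd p') \<longleftrightarrow> odd (snd p)"
    using e ev unfolding P by auto
  have l: "lft p q \<longrightarrow> lft p' q'"
  proof
    assume L: "lft p q"
    have "dlt p q = -2" using lft_facts(1)[OF L] .
    then show "lft p' q'" using L ddir_cases[of p q] unfolding lft_def P Q by auto
  qed
  have r: "rgt m p q \<longrightarrow> rgt (m + 4) p' q'"
  proof
    assume R: "rgt m p q"
    have "dlt p q = 2" using rgt_facts(1)[OF R m] .
    then show "rgt (m + 4) p' q'" using R ddir_cases[of p q] unfolding rgt_def P Q
      by (auto simp: doubleton_eq_iff)
  qed
  show ?thesis using l r dd par by blast
qed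

lemma step_generic:
  assumes n: "1 \<le> n" and K: "3 \<le> K" and cy: "cycc K n c w"
    and m: "m = K + 4" and u: "u = map iota w"
    and dis: "distinct is"
    and E: "\<forall>i\<in>set is. Suc i < length u \<and> (lft (u!i) (u!Suc i) \<or> rgt m (u!i) (u!Suc i))"
    and eps: "\<forall>i\<in>set is. eps i = 1 \<or> eps i = -1"
    and inj: "\<forall>i\<in>set is. \<forall>j\<in>set is. kap m n (u!i) (u!Suc i) (eps i) = kap m n (u!j) (u!Suc j) (eps j) \<longrightarrow> i = j"
    and sur: "\<forall>v. bandv m v \<longrightarrow> (\<exists>i\<in>set is. cls m n v = kap m n (u!i) (u!Suc i) (eps i))"
    and sm: "sum_list (map (\<lambda>i. ddir (u!i) (u!Suc i)) is) = 0"
  shows "\<exists>w' pos. cycc m n c w' \<and>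
     (\<forall>i\<in>set is. Suc (pos i) < length (map iota w') \<and>
        (lft (u!i) (u!Suc i) \<longrightarrow> lft (map iota w' ! pos i) (map iota w' ! Suc (pos i))) \<and>
        (rgt m (u!i) (u!Suc i) \<longrightarrow> rgt (m + 4) (map iota w' ! pos i) (map iota w' ! Suc (pos i))) \<and>
        ddir (map iota w' ! pos i) (map iota w' ! Suc (pos i)) = - ddir (u!i) (u!Suc i) \<and>
        (even (snd (map iota w' ! pos i)) \<longleftrightarrow> odd (snd (u!i)))) \<and>
     (\<forall>i\<in>set is. \<forall>j\<in>set is. pos i = pos j \<longrightarrow> i = j)"
proof -
  have m7: "7 \<le> m" using m K by simp
  obtain w' where cyc': "cycc m n c w'" and P: "\<forall>i\<in>set is. \<exists>pos s'. even s' \<and> Suc pos < length w' \<and>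
           w' ! pos = sigma_pow m n s' (Z n (u!i) (u!Suc i) (eps i) ! 0) \<and>
           w' ! Suc pos = sigma_pow m n s' (Z n (u!i) (u!Suc i) (eps i) ! 1)"
    using core[OF n K cy m u dis E eps inj sur sm] by blast
  obtain pos where P2: "\<forall>i\<in>set is. \<exists>s'. even s' \<and> Suc (pos i) < length w' \<and>
           w' ! pos i = sigma_pow m n s' (Z n (u!i) (u!Suc i) (eps i) ! 0) \<and>
           w' ! Suc (pos i) = sigma_pow m n s' (Z n (u!i) (u!Suc i) (eps i) ! 1)"
    using bchoice[OF P] by blast
  have A: "Suc (pos i) < length (map iota w') \<and>
        (lft (u!i) (u!Suc i) \<longrightarrow> lft (map iota w' ! pos i) (map iota w' ! Suc (pos i))) \<and>
        (rgt m (u!i) (u!Suc i) \<longrightarrow> rgt (m + 4) (map iota w' ! pos i) (map iota w' ! Suc (pos i))) \<and>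
        ddir (map iota w' ! pos i) (map iota w' ! Suc (pos i)) = - ddir (u!i) (u!Suc i) \<and>
        (even (snd (map iota w' ! pos i)) \<longleftrightarrow> odd (snd (u!i)))" if ii: "i \<in> set is" for i
  proof -
    obtain s' where s': "even s'" "Suc (pos i) < length w'"
      "w' ! pos i = sigma_pow m n s' (Z n (u!i) (u!Suc i) (eps i) ! 0)"
      "w' ! Suc (pos i) = sigma_pow m n s' (Z n (u!i) (u!Suc i) (eps i) ! 1)"
      using P2 ii by blast
    have "map iota w' ! pos i = iota (sigma_pow m n s' (Z n (u!i) (u!Suc i) (eps i) ! 0))"
      "map iota w' ! Suc (pos i) = iota (sigma_pow m n s' (Z n (u!i) (u!Suc i) (eps i) ! 1))"
      using s' by auto
    then show ?thesis using newedge[OF n m7 _ _ s'(1)] E eps ii s'(2) by simp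
  qed
  have B: "pos i = pos j \<Longrightarrow> i = j" if ii: "i \<in> set is" and jj: "j \<in> set is" for i j
  proof -
    assume pij: "pos i = pos j"
    obtain s1 where s1: "w' ! pos i = sigma_pow m n s1 (Z n (u!i) (u!Suc i) (eps i) ! 0)"
      using P2 ii by blast
    obtain s2 where s2: "w' ! pos j = sigma_pow m n s2 (Z n (u!j) (u!Suc j) (eps j) ! 0)"
      using P2 jj by blast
    define a where "a = Z n (u!i) (u!Suc i) (eps i) ! 0"
    define b where "b = Z n (u!j) (u!Suc j) (eps j) ! 0"
    have "orb m n a = orb m n b" using s1 s2 pij orb_sigma[OF n] unfolding a_def b_def by metis
    have L0: "0 < LL n" using LL_pos2[OF n] by simp
    have ai: "a \<in> set (Z n (u!i) (u!Suc i) (eps i))" unfolding a_def using L0 by (simp add: Z_len)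
    have bj: "b \<in> set (Z n (u!j) (u!Suc j) (eps j))" unfolding b_def using L0 by (simp add: Z_len)
    have Ei: "lft (u!i) (u!Suc i) \<or> rgt m (u!i) (u!Suc i)" using E ii by blast
    have Ej: "lft (u!j) (u!Suc j) \<or> rgt m (u!j) (u!Suc j)" using E jj by blast
    have ba: "bandv m a" using Z_band[OF m7 Ei ai] .
    have bb: "bandv m b" using Z_band[OF m7 Ej bj] .
    have "bet m n a = bet m n b" using \<open>orb m n a = orb m n b\<close> bet_orb[OF n _ ba bb] m7 by simp
    then have "cls m n a = cls m n b" by (simp add: cls_def)
    then have "kap m n (u!i) (u!Suc i) (eps i) = kap m n (u!j) (u!Suc j) (eps j)"
      using Z_cls[OF m7 Ei ai] Z_cls[OF m7 Ej bj] by simp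
    then show "i = j" using inj ii jj by blast
  qed
  show ?thesis using cyc' A B by blast
qed

definition Atyp :: "nat \<Rightarrow> vtx list \<Rightarrow> nat \<Rightarrow> bool" where
  "Atyp m u i \<longleftrightarrow> (lft (u!i) (u!Suc i) \<and> even (snd (u!i))) \<or> (rgt m (u!i) (u!Suc i) \<and> odd (snd (u!i)))"

definition Btyp :: "nat \<Rightarrow> vtx list \<Rightarrow> nat \<Rightarrow> bool" where
  "Btyp m u i \<longleftrightarrow> (lft (u!i) (u!Suc i) \<and> odd (snd (u!i))) \<or> (rgt m (u!i) (u!Suc i) \<and> even (snd (u!i)))"

definition good :: "nat \<Rightarrow> nat \<Rightarrow> vtx list \<Rightarrow> nat list \<Rightarrow> bool" where
  "good m n u is \<longleftrightarrow> distinct is \<and>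
     (\<forall>i\<in>set is. Suc i < length u \<and> (lft (u!i) (u!Suc i) \<or> rgt m (u!i) (u!Suc i))) \<and>
     sum_list (map (\<lambda>i. ddir (u!i) (u!Suc i)) is) = 0 \<and>
     (if even n then (\<exists>a b c d. is = [a, b, c, d] \<and> even (snd (u!a)) \<and> even (snd (u!b)) \<and>
                                odd (snd (u!c)) \<and> odd (snd (u!d)))
      else (\<exists>a b. is = [a, b] \<and> Atyp m u a \<and> Btyp m u b))"

lemma mod4_cases: "0 \<le> (x::int) \<Longrightarrow> x < 4 \<Longrightarrow> x = 0 \<or> x = 1 \<or> x = 2 \<or> x = 3"
  by auto

lemma step_even:
  assumes n: "1 \<le> n" and ev: "even n" and K: "3 \<le> K" and cy: "cycc K n cl w"
    and g: "good (K + 4) n (map iota w) is"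
  shows "\<exists>w' is'. cycc (K + 4) n cl w' \<and> good (K + 4 + 4) n (map iota w') is'"
proof -
  define m where "m = K + 4"
  define u where "u = map iota w"
  have m7: "7 \<le> m" using K by (simp add: m_def)
  obtain a b c d where isd: "is = [a, b, c, d]" and pa: "even (snd (u!a))" and pb: "even (snd (u!b))"
    and pc: "odd (snd (u!c))" and pd: "odd (snd (u!d))"
    using g ev unfolding good_def u_def by auto
  have dis: "distinct is" using g by (simp add: good_def)
  have E: "\<forall>i\<in>set is. Suc i < length u \<and> (lft (u!i) (u!Suc i) \<or> rgt m (u!i) (u!Suc i))"
    using g unfolding good_def u_def m_def by blast
  have sm: "sum_list (map (\<lambda>i. ddir (u!i) (u!Suc i)) is) = 0" using g unfolding good_def u_def by blast
  define kp where "kp i e = kap m n (u!i) (u!Suc i) e" for i e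
  define eps :: "nat \<Rightarrow> int" where "eps i = (if i = b then (if kp a 1 = kp b 1 then -1 else 1)
     else if i = d then (if kp c 1 = kp d 1 then -1 else 1) else 1)" for i :: nat
  have dabcd: "a \<noteq> b" "a \<noteq> c" "a \<noteq> d" "b \<noteq> c" "b \<noteq> d" "c \<noteq> d" using dis isd by auto
  have epsv: "eps i = 1 \<or> eps i = -1" for i by (simp add: eps_def)
  have ea: "eps a = 1" and ec: "eps c = 1" using dabcd by (auto simp: eps_def)
  have par: "kp i (eps i) mod 2 = (snd (u!i) + 1) mod 2" for i
    unfolding kp_def using kap_par_even[OF ev epsv] .
  have rng: "0 \<le> kp i e \<and> kp i e < 4" for i e unfolding kp_def using kap_range_even[OF ev] .
  have odd13: "kp i (eps i) = 1 \<or> kp i (eps i) = 3" if "even (snd (u!i))" for i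
  proof -
    have "(snd (u!i) + 1) mod 2 = 1" using that by presburger
    then have "kp i (eps i) mod 2 = 1" using par[of i] by simp
    then show ?thesis using mod4_cases[of "kp i (eps i)"] rng[of i "eps i"] by auto
  qed
  have even02: "kp i (eps i) = 0 \<or> kp i (eps i) = 2" if "odd (snd (u!i))" for i
  proof -
    have "kp i (eps i) mod 2 = 0" using par[of i] that by presburger
    then show ?thesis using mod4_cases[of "kp i (eps i)"] rng[of i "eps i"] by auto
  qed
  have flip: "kp i (-1) = (kp i 1 + 2) mod 4" for i unfolding kp_def using kap_even_flip[OF ev] .
  have neab: "kp a (eps a) \<noteq> kp b (eps b)"
  proof (cases "kp a 1 = kp b 1")
    case True
    then have "kp b (eps b) = (kp a 1 + 2) mod 4" using flip[of b] by (simp add: eps_def)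
    moreover have "kp a 1 = 1 \<or> kp a 1 = 3" using odd13[OF pa] ea by simp
    ultimately show ?thesis using ea by auto
  next
    case False
    then show ?thesis using ea dabcd by (simp add: eps_def)
  qed
  have necd: "kp c (eps c) \<noteq> kp d (eps d)"
  proof (cases "kp c 1 = kp d 1")
    case True
    then have "kp d (eps d) = (kp c 1 + 2) mod 4" using flip[of d] dabcd by (simp add: eps_def)
    moreover have "kp c 1 = 0 \<or> kp c 1 = 2" using even02[OF pc] ec by simp
    ultimately show ?thesis using ec by auto
  next
    case False
    then show ?thesis using ec dabcd by (simp add: eps_def)
  qed
  have ka: "kp a (eps a) = 1 \<or> kp a (eps a) = 3" using odd13[OF pa] .
  have kb: "kp b (eps b) = 1 \<or> kp b (eps b) = 3" using odd13[OF pb] .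
  have kc: "kp c (eps c) = 0 \<or> kp c (eps c) = 2" using even02[OF pc] .
  have kd: "kp d (eps d) = 0 \<or> kp d (eps d) = 2" using even02[OF pd] .
  have inj: "\<forall>i\<in>set is. \<forall>j\<in>set is. kap m n (u!i) (u!Suc i) (eps i) = kap m n (u!j) (u!Suc j) (eps j) \<longrightarrow> i = j"
    using ka kb kc kd neab necd unfolding isd kp_def by auto
  have sur: "\<forall>v. bandv m v \<longrightarrow> (\<exists>i\<in>set is. cls m n v = kap m n (u!i) (u!Suc i) (eps i))"
  proof (intro allI impI)
    fix v assume "bandv m v"
    have "0 \<le> cls m n v \<and> cls m n v < 4" using cls_range[OF n, of m v] ev by simp
    then have "cls m n v = 0 \<or> cls m n v = 1 \<or> cls m n v = 2 \<or> cls m n v = 3" by auto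
    then show "\<exists>i\<in>set is. cls m n v = kap m n (u!i) (u!Suc i) (eps i)"
      using ka kb kc kd neab necd unfolding isd kp_def by auto
  qed
  have epsall: "\<forall>i\<in>set is. eps i = 1 \<or> eps i = -1" using epsv by blast
  obtain w' pos where cyc': "cycc m n cl w'" and A: "\<forall>i\<in>set is. Suc (pos i) < length (map iota w') \<and>
        (lft (u!i) (u!Suc i) \<longrightarrow> lft (map iota w' ! pos i) (map iota w' ! Suc (pos i))) \<and>
        (rgt m (u!i) (u!Suc i) \<longrightarrow> rgt (m + 4) (map iota w' ! pos i) (map iota w' ! Suc (pos i))) \<and>
        ddir (map iota w' ! pos i) (map iota w' ! Suc (pos i)) = - ddir (u!i) (u!Suc i) \<and>
        (even (snd (map iota w' ! pos i)) \<longleftrightarrow> odd (snd (u!i)))"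
    and B: "\<forall>i\<in>set is. \<forall>j\<in>set is. pos i = pos j \<longrightarrow> i = j"
    using step_generic[OF n K cy m_def u_def dis E epsall inj sur sm] by blast
  define u' where "u' = map iota w'"
  have A': "\<forall>i\<in>set is. Suc (pos i) < length u' \<and>
        (lft (u!i) (u!Suc i) \<longrightarrow> lft (u' ! pos i) (u' ! Suc (pos i))) \<and>
        (rgt m (u!i) (u!Suc i) \<longrightarrow> rgt (m + 4) (u' ! pos i) (u' ! Suc (pos i))) \<and>
        ddir (u' ! pos i) (u' ! Suc (pos i)) = - ddir (u!i) (u!Suc i) \<and>
        (even (snd (u' ! pos i)) \<longleftrightarrow> odd (snd (u!i)))" using A unfolding u'_def by blast
  define is' where "is' = [pos c, pos d, pos a, pos b]"
  have dis': "distinct is'" using B dabcd unfolding is'_def isd by auto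
  have E': "\<forall>i\<in>set is'. Suc i < length u' \<and> (lft (u'!i) (u'!Suc i) \<or> rgt (m + 4) (u'!i) (u'!Suc i))"
    using A' E unfolding is'_def isd by auto
  have sm': "sum_list (map (\<lambda>i. ddir (u'!i) (u'!Suc i)) is') = 0"
    using A' sm unfolding is'_def isd by simp
  have pat: "even (snd (u'!pos c)) \<and> even (snd (u'!pos d)) \<and> odd (snd (u'!pos a)) \<and> odd (snd (u'!pos b))"
    using A' pa pb pc pd unfolding isd by simp
  have "good (m + 4) n u' is'"
    unfolding good_def using dis' E' sm' pat ev unfolding is'_def by auto
  then show ?thesis using cyc' unfolding m_def u'_def by blast
qed

lemma step_odd:
  assumes n: "1 \<le> n" and od: "odd n" and K: "3 \<le> K" and cy: "cycc K n cl w"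
    and g: "good (K + 4) n (map iota w) is"
  shows "\<exists>w' is'. cycc (K + 4) n cl w' \<and> good (K + 4 + 4) n (map iota w') is'"
proof -
  define m where "m = K + 4"
  define u where "u = map iota w"
  have m7: "7 \<le> m" using K by (simp add: m_def)
  obtain a b where isd: "is = [a, b]" and ta: "Atyp m u a" and tb: "Btyp m u b"
    using g od unfolding good_def u_def m_def by auto
  have dis: "distinct is" using g by (simp add: good_def)
  have E: "\<forall>i\<in>set is. Suc i < length u \<and> (lft (u!i) (u!Suc i) \<or> rgt m (u!i) (u!Suc i))"
    using g unfolding good_def u_def m_def by blast
  have sm: "sum_list (map (\<lambda>i. ddir (u!i) (u!Suc i)) is) = 0" using g unfolding good_def u_def by blast
  define eps where "eps i = (1::int)" for i :: nat
  have ab: "a \<noteq> b" using dis isd by auto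
  have ka: "kap m n (u!a) (u!Suc a) (eps a) = 1"
  proof -
    have k: "kap m n (u!a) (u!Suc a) 1 = (if lft (u!a) (u!Suc a) then (snd (u!a) + 1) mod 2 else snd (u!a) mod 2)"
      using kap_odd[OF od] by simp
    show ?thesis using ta
    proof (unfold Atyp_def, elim disjE conjE)
      assume L: "lft (u!a) (u!Suc a)" "even (snd (u!a))"
      have "(snd (u!a) + 1) mod 2 = 1" using L(2) by presburger
      then show ?thesis using k L(1) by (simp add: eps_def)
    next
      assume R: "rgt m (u!a) (u!Suc a)" "odd (snd (u!a))"
      then have "\<not> lft (u!a) (u!Suc a)" using rgt_facts(5)[OF R(1) m7] by simp
      moreover have "snd (u!a) mod 2 = 1" using R(2) by presburger
      ultimately show ?thesis using k by (simp add: eps_def)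
    qed
  qed
  have kb: "kap m n (u!b) (u!Suc b) (eps b) = 0"
  proof -
    have k: "kap m n (u!b) (u!Suc b) 1 = (if lft (u!b) (u!Suc b) then (snd (u!b) + 1) mod 2 else snd (u!b) mod 2)"
      using kap_odd[OF od] by simp
    show ?thesis using tb
    proof (unfold Btyp_def, elim disjE conjE)
      assume L: "lft (u!b) (u!Suc b)" "odd (snd (u!b))"
      have "(snd (u!b) + 1) mod 2 = 0" using L(2) by presburger
      then show ?thesis using k L(1) by (simp add: eps_def)
    next
      assume R: "rgt m (u!b) (u!Suc b)" "even (snd (u!b))"
      then have "\<not> lft (u!b) (u!Suc b)" using rgt_facts(5)[OF R(1) m7] by simp
      moreover have "snd (u!b) mod 2 = 0" using R(2) by presburger
      ultimately show ?thesis using k by (simp add: eps_def)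
    qed
  qed
  have inj: "\<forall>i\<in>set is. \<forall>j\<in>set is. kap m n (u!i) (u!Suc i) (eps i) = kap m n (u!j) (u!Suc j) (eps j) \<longrightarrow> i = j"
    using ka kb unfolding isd by auto
  have sur: "\<forall>v. bandv m v \<longrightarrow> (\<exists>i\<in>set is. cls m n v = kap m n (u!i) (u!Suc i) (eps i))"
  proof (intro allI impI)
    fix v assume "bandv m v"
    have "0 \<le> cls m n v \<and> cls m n v < 2" using cls_range[OF n, of m v] od by simp
    then have "cls m n v = 0 \<or> cls m n v = 1" by auto
    then show "\<exists>i\<in>set is. cls m n v = kap m n (u!i) (u!Suc i) (eps i)"
      using ka kb unfolding isd by auto
  qed
  have epsall: "\<forall>i\<in>set is. eps i = 1 \<or> eps i = -1" by (simp add: eps_def)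
  obtain w' pos where cyc': "cycc m n cl w'" and A: "\<forall>i\<in>set is. Suc (pos i) < length (map iota w') \<and>
        (lft (u!i) (u!Suc i) \<longrightarrow> lft (map iota w' ! pos i) (map iota w' ! Suc (pos i))) \<and>
        (rgt m (u!i) (u!Suc i) \<longrightarrow> rgt (m + 4) (map iota w' ! pos i) (map iota w' ! Suc (pos i))) \<and>
        ddir (map iota w' ! pos i) (map iota w' ! Suc (pos i)) = - ddir (u!i) (u!Suc i) \<and>
        (even (snd (map iota w' ! pos i)) \<longleftrightarrow> odd (snd (u!i)))"
    and B: "\<forall>i\<in>set is. \<forall>j\<in>set is. pos i = pos j \<longrightarrow> i = j"
    using step_generic[OF n K cy m_def u_def dis E epsall inj sur sm] by blast
  define u' where "u' = map iota w'"
  have A': "\<forall>i\<in>set is. Suc (pos i) < length u' \<and>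
        (lft (u!i) (u!Suc i) \<longrightarrow> lft (u' ! pos i) (u' ! Suc (pos i))) \<and>
        (rgt m (u!i) (u!Suc i) \<longrightarrow> rgt (m + 4) (u' ! pos i) (u' ! Suc (pos i))) \<and>
        ddir (u' ! pos i) (u' ! Suc (pos i)) = - ddir (u!i) (u!Suc i) \<and>
        (even (snd (u' ! pos i)) \<longleftrightarrow> odd (snd (u!i)))" using A unfolding u'_def by blast
  define is' where "is' = [pos b, pos a]"
  have dis': "distinct is'" using B ab unfolding is'_def isd by auto
  have E': "\<forall>i\<in>set is'. Suc i < length u' \<and> (lft (u'!i) (u'!Suc i) \<or> rgt (m + 4) (u'!i) (u'!Suc i))"
    using A' E unfolding is'_def isd by auto
  have sm': "sum_list (map (\<lambda>i. ddir (u'!i) (u'!Suc i)) is') = 0"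
    using A' sm unfolding is'_def isd by simp
  have Ab: "Atyp (m + 4) u' (pos b)" using A' tb unfolding isd Atyp_def Btyp_def by auto
  have Ba: "Btyp (m + 4) u' (pos a)" using A' ta unfolding isd Atyp_def Btyp_def by auto
  have "good (m + 4) n u' is'"
    unfolding good_def using dis' E' sm' Ab Ba od unfolding is'_def by auto
  then show ?thesis using cyc' unfolding m_def u'_def by blast
qed

lemma cycc_N3:
  assumes n: "1 \<le> n" and K: "3 \<le> K" and cy: "cycc K n c w"
  shows "3 \<le> length (butlast w)"
proof -
  have o: "orb K n (a, 0) = (a, 0)" for a by (simp add: orb_def)
  have sub: "{(0,0), (1,0), (2,0)} \<subseteq> orb K n ` set (butlast w)"
  proof -
    have "in_strip K (a, 0)" if "0 \<le> a" "a \<le> 2" for a :: int using K that by (simp add: in_strip_def)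
    then have "orb K n (a, 0) \<in> orb K n ` set (butlast w)" if "0 \<le> a" "a \<le> 2" for a :: int
      using cy that unfolding cycc_def by blast
    then show ?thesis using o by (metis empty_subsetI insert_subset le_numeral_extra(1) order_refl
        zero_le_numeral zero_le_one one_le_numeral)
  qed
  have "card {(0::int,0::int), (1,0), (2,0)} = 3" by simp
  moreover have "card (orb K n ` set (butlast w)) = length (butlast w)"
  proof -
    have "distinct (map (orb K n) (butlast w))" using cy by (simp add: cycc_def)
    then show ?thesis by (metis distinct_card length_map list.set_map)
  qed
  moreover have "card {(0::int,0::int), (1,0), (2,0)} \<le> card (orb K n ` set (butlast w))"
    using sub by (intro card_mono) auto
  ultimately show ?thesis by simp
qed

lemma cycc_uniq:
  assumes n: "1 \<le> n" and K: "3 \<le> K" and cy: "cycc K n c w"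
    and i: "Suc i < length w" and j: "Suc j < length w"
    and e: "{w!i, w!Suc i} = {w!j, w!Suc j}"
  shows "i = j"
proof -
  define N where "N = length w - 1"
  have N3: "3 \<le> N" using cycc_N3[OF n K cy] by (simp add: N_def)
  have d: "distinct (map (orb K n) (butlast w))" using cy by (simp add: cycc_def)
  have O: "a < N \<Longrightarrow> b < N \<Longrightarrow> orb K n (w!a) = orb K n (w!b) \<Longrightarrow> a = b" for a b
  proof -
    assume a: "a < N" and b: "b < N" and ab: "orb K n (w!a) = orb K n (w!b)"
    have "map (orb K n) (butlast w) ! a = map (orb K n) (butlast w) ! b"
      using a b ab by (simp add: N_def nth_butlast)
    moreover have "a < length (map (orb K n) (butlast w))" "b < length (map (orb K n) (butlast w))"
      using a b by (auto simp: N_def)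
    ultimately show "a = b" using d by (simp only: nth_eq_iff_index_eq)
  qed
  have ne: "w \<noteq> []" using i by auto
  have lastN: "w ! N = last w" using ne by (simp add: N_def last_conv_nth)
  have ON: "orb K n (w!N) = orb K n (w!0)"
    using cy lastN ne orb_sigma[OF n] by (simp add: cycc_def hd_conv_nth)
  have iN: "i < N" and jN: "j < N" using i j by (auto simp: N_def)
  from e consider "w!i = w!j \<and> w!Suc i = w!Suc j" | "w!i = w!Suc j \<and> w!Suc i = w!j"
    by (auto simp: doubleton_eq_iff)
  then show ?thesis
  proof cases
    case 1
    then show ?thesis using O iN jN by metis
  next
    case 2
    show ?thesis
    proof (cases "Suc j < N")
      case True
      then have ij: "i = Suc j" using O iN 2 by metis
      show ?thesis
      proof (cases "Suc i < N")
        case True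
        then have "Suc i = j" using O jN 2 by metis
        then show ?thesis using ij by simp
      next
        case False
        then have "Suc i = N" using i by (simp add: N_def)
        then have "orb K n (w!j) = orb K n (w!0)" using 2 ON by metis
        then have "j = 0" using O jN N3 by (metis le_trans zero_less_numeral le_less_trans le_refl
              less_le_trans not_less)
        then show ?thesis using ij \<open>Suc i = N\<close> N3 by simp
      qed
    next
      case False
      then have "Suc j = N" using j by (simp add: N_def)
      then have "orb K n (w!i) = orb K n (w!0)" using 2 ON by metis
      then have i0: "i = 0" using O iN N3 by (metis less_le_trans not_less zero_less_numeral le_trans)
      then have "w!1 = w!j" using 2 by simp
      then have "1 = j" using O jN N3 by (metis One_nat_def Suc_le_lessD le_trans numeral_3_eq_3 Suc_leD)
      then show ?thesis using \<open>Suc j = N\<close> N3 by simp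
    qed
  qed
qed


lemma uniq_u:
  assumes n: "1 \<le> n" and K: "3 \<le> K" and cy: "cycc K n c w" and u: "u = map iota w"
    and i: "Suc i < length u" and j: "Suc j < length u"
    and e: "{u!i, u!Suc i} = {u!j, u!Suc j}"
  shows "i = j"
proof -
  have "iota ` {w!i, w!Suc i} = iota ` {w!j, w!Suc j}" using e i j u by simp
  then have "{w!i, w!Suc i} = {w!j, w!Suc j}" using inj_iota by (metis inj_image_eq_iff)
  then show ?thesis using cycc_uniq[OF n K cy] i j u by simp
qed

lemma left_lft: "left_edge {p, q} \<Longrightarrow> lft p q"
  unfolding left_edge_def lft_def by (auto simp: doubleton_eq_iff abs_minus_commute)

lemma right_rgt: "right_edge m {p, q} \<Longrightarrow> rgt m p q"
  unfolding right_edge_def rgt_def by (auto simp: doubleton_eq_iff abs_minus_commute)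

lemma even_edge_p: "even_edge {p, q} \<Longrightarrow> even (snd p)"
  by (simp add: even_edge_def)

lemma odd_edge_p: "odd_edge {p, q} \<Longrightarrow> odd (snd p)"
  by (simp add: odd_edge_def)

lemma lr_rows: "lft p q \<or> rgt m p q \<Longrightarrow> \<bar>snd p - snd q\<bar> = 2"
  by (auto simp: lft_def rgt_def)

lemma up_iff:
  assumes n: "1 \<le> n" and K: "3 \<le> K" and cy: "cycc K n c w" and u: "u = map iota w"
    and i: "Suc i < length u" and E: "lft (u!i) (u!Suc i) \<or> rgt m (u!i) (u!Suc i)"
  shows "traverses_up u {u!i, u!Suc i} \<longleftrightarrow> ddir (u!i) (u!Suc i) = -1"
proof
  assume "traverses_up u {u!i, u!Suc i}"
  then obtain j where j: "Suc j < length u" "{u!i, u!Suc i} = {u!j, u!Suc j}" "snd (u!j) < snd (u!Suc j)"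
    unfolding traverses_up_def by blast
  have "i = j" using uniq_u[OF n K cy u i j(1) j(2)] .
  then show "ddir (u!i) (u!Suc i) = -1" using j(3) by (simp add: ddir_def)
next
  assume "ddir (u!i) (u!Suc i) = -1"
  then have "snd (u!i) < snd (u!Suc i)" by (simp add: ddir_def split: if_splits)
  then show "traverses_up u {u!i, u!Suc i}" unfolding traverses_up_def using i by blast
qed

lemma sum4:
  assumes "length (filter P [a, b, c, d]) = 2"
  shows "(if P a then -1 else 1) + ((if P b then -1 else 1) + ((if P c then -1 else 1) + (if P d then -1 else (1::int)))) = 0"
  using assms by (cases "P a"; cases "P b"; cases "P c"; cases "P d") auto

lemma sum2:
  assumes "length (filter P [a, b]) = 1"
  shows "(if P a then -1 else 1) + (if P b then -1 else (1::int)) = 0"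
  using assms by (cases "P a"; cases "P b") auto

lemma base:
  assumes n: "1 \<le> n" and m: "7 \<le> m" and ex: "extendable m n w"
  shows "\<exists>c is. cycc (m - 4) n c w \<and> good (m - 4 + 4) n (map iota w) is"
proof -
  define K where "K = m - 4"
  have K: "3 \<le> K" using m by (simp add: K_def)
  have mK: "m = K + 4" using m by (simp add: K_def)
  define u where "u = map iota w"
  have tl: "tour_lift K n w" using ex by (simp add: extendable_def K_def)
  obtain c where cy: "cycc K n c w" using tour_lift_cycc[OF n tl] by blast
  obtain C where ext: "extending m n C" and tr: "\<forall>e\<in>C. traverses u e"
    and cu: "card {e \<in> C. traverses_up u e} = card C div 2"
    using ex unfolding extendable_def u_def by blast
  have fin: "finite C" using ext unfolding extending_def by blast
  have lr: "\<forall>e\<in>C. left_edge e \<or> right_edge m e" using ext unfolding extending_def by blast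
  have "\<forall>e\<in>C. \<exists>i. Suc i < length u \<and> e = {u!i, u!Suc i}" using tr unfolding traverses_def by blast
  from bchoice[OF this] obtain ix where ix: "\<forall>e\<in>C. Suc (ix e) < length u \<and> e = {u!ix e, u!Suc (ix e)}"
    by blast
  have eqe: "e = {u!ix e, u!Suc (ix e)}" if "e \<in> C" for e using ix that by blast
  have ixl: "Suc (ix e) < length u" if "e \<in> C" for e using ix that by blast
  have ixinj: "e = e'" if "e \<in> C" "e' \<in> C" "ix e = ix e'" for e e'
    using eqe[OF that(1)] eqe[OF that(2)] that(3) by simp
  have Eix: "lft (u!ix e) (u!Suc (ix e)) \<or> rgt m (u!ix e) (u!Suc (ix e))" if "e \<in> C" for e
  proof -
    have "left_edge {u!ix e, u!Suc (ix e)} \<or> right_edge m {u!ix e, u!Suc (ix e)}"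
      using lr that eqe[OF that] by auto
    then show ?thesis using left_lft right_rgt by blast
  qed
  have upix: "traverses_up u e \<longleftrightarrow> ddir (u!ix e) (u!Suc (ix e)) = -1" if "e \<in> C" for e
  proof -
    have "traverses_up u {u!ix e, u!Suc (ix e)} \<longleftrightarrow> ddir (u!ix e) (u!Suc (ix e)) = -1"
      by (rule up_iff[OF n K cy u_def ixl[OF that] Eix[OF that]])
    then show ?thesis using eqe[OF that] by simp
  qed
  have dd: "ddir (u!ix e) (u!Suc (ix e)) = (if traverses_up u e then -1 else 1)" if "e \<in> C" for e
    using upix[OF that] ddir_cases[of "u!ix e" "u!Suc (ix e)"] by auto
  have ext2: "if even n then card C = 4 \<and> card {e \<in> C. even_edge e} = 2 \<and> card {e \<in> C. odd_edge e} = 2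
      else (\<exists>e1 e2. C = {e1, e2} \<and> e1 \<noteq> e2 \<and>
           ((left_edge e1 \<and> even_edge e1) \<or> (right_edge m e1 \<and> odd_edge e1)) \<and>
           ((left_edge e2 \<and> odd_edge e2) \<or> (right_edge m e2 \<and> even_edge e2)))"
    using ext unfolding extending_def by blast
  have good: "\<exists>is. good m n u is"
  proof (cases "even n")
    case True
    have cC: "card C = 4" and ce: "card {e \<in> C. even_edge e} = 2" and co: "card {e \<in> C. odd_edge e} = 2"
      using ext2 unfolding if_P[OF True] by blast+
    obtain e1 e2 where e12: "{e \<in> C. even_edge e} = {e1, e2}" "e1 \<noteq> e2" using ce card_2_iff by metis
    obtain e3 e4 where e34: "{e \<in> C. odd_edge e} = {e3, e4}" "e3 \<noteq> e4" using co card_2_iff by metis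
    have inC: "e1 \<in> C" "e2 \<in> C" "e3 \<in> C" "e4 \<in> C" using e12 e34 by blast+
    have ev: "even_edge e1" "even_edge e2" using e12 by blast+
    have od: "odd_edge e3" "odd_edge e4" using e34 by blast+
    have eo: "\<not> (even_edge e \<and> odd_edge e)" if "e \<in> C" for e
    proof -
      have "e = {u!ix e, u!Suc (ix e)}" using ix that by blast
      then show ?thesis by (auto simp: even_edge_def odd_edge_def)
    qed
    have dist: "distinct [e1, e2, e3, e4]" using e12(2) e34(2) ev od eo inC by auto
    have Ceq: "C = {e1, e2, e3, e4}"
    proof -
      have sub: "{e1, e2, e3, e4} \<subseteq> C" using inC by auto
      moreover have "card {e1, e2, e3, e4} = card C" using dist cC by simp
      ultimately show ?thesis using card_subset_eq[OF fin sub] by simp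
    qed
    define isl where "isl = [ix e1, ix e2, ix e3, ix e4]"
    have disI: "distinct isl" unfolding isl_def using dist ixinj[OF inC(1) inC(2)] ixinj[OF inC(1) inC(3)]
      ixinj[OF inC(1) inC(4)] ixinj[OF inC(2) inC(3)] ixinj[OF inC(2) inC(4)] ixinj[OF inC(3) inC(4)] by auto
    have EI: "\<forall>i\<in>set isl. Suc i < length u \<and> (lft (u!i) (u!Suc i) \<or> rgt m (u!i) (u!Suc i))"
      unfolding isl_def using ixl[OF inC(1)] ixl[OF inC(2)] ixl[OF inC(3)] ixl[OF inC(4)]
        Eix[OF inC(1)] Eix[OF inC(2)] Eix[OF inC(3)] Eix[OF inC(4)] by simp
    have lf: "length (filter (traverses_up u) [e1, e2, e3, e4]) = 2"
    proof -
      have "length (filter (traverses_up u) [e1, e2, e3, e4]) = card ({x. traverses_up u x} \<inter> set [e1, e2, e3, e4])"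
        using dist by (rule distinct_length_filter)
      also have "{x. traverses_up u x} \<inter> set [e1, e2, e3, e4] = {e \<in> C. traverses_up u e}" using Ceq by auto
      finally show ?thesis using cu cC by simp
    qed
    have smI: "sum_list (map (\<lambda>i. ddir (u!i) (u!Suc i)) isl) = 0"
      unfolding isl_def using dd[OF inC(1)] dd[OF inC(2)] dd[OF inC(3)] dd[OF inC(4)] sum4[OF lf] by simp
    have par: "even (snd (u!ix e1))" "even (snd (u!ix e2))" "odd (snd (u!ix e3))" "odd (snd (u!ix e4))"
      using even_edge_p[of "u!ix e1" "u!Suc (ix e1)"] even_edge_p[of "u!ix e2" "u!Suc (ix e2)"]
        odd_edge_p[of "u!ix e3" "u!Suc (ix e3)"] odd_edge_p[of "u!ix e4" "u!Suc (ix e4)"]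
        ev od eqe[OF inC(1)] eqe[OF inC(2)] eqe[OF inC(3)] eqe[OF inC(4)] by simp_all
    have "good m n u isl" unfolding good_def if_P[OF True] using disI EI smI par isl_def by blast
    then show ?thesis by blast
  next
    case False
    obtain e1 e2 where C2: "C = {e1, e2}" "e1 \<noteq> e2"
      and t1: "(left_edge e1 \<and> even_edge e1) \<or> (right_edge m e1 \<and> odd_edge e1)"
      and t2: "(left_edge e2 \<and> odd_edge e2) \<or> (right_edge m e2 \<and> even_edge e2)"
      using ext2 unfolding if_not_P[OF False] by blast
    have inC: "e1 \<in> C" "e2 \<in> C" using C2 by auto
    have cC: "card C = 2" using C2 by simp
    define isl where "isl = [ix e1, ix e2]"
    have "ix e1 \<noteq> ix e2" using ixinj[OF inC] C2(2) by blast
    then have disI: "distinct isl" unfolding isl_def by simp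
    have EI: "\<forall>i\<in>set isl. Suc i < length u \<and> (lft (u!i) (u!Suc i) \<or> rgt m (u!i) (u!Suc i))"
      unfolding isl_def using ixl[OF inC(1)] ixl[OF inC(2)] Eix[OF inC(1)] Eix[OF inC(2)] by simp
    have lf: "length (filter (traverses_up u) [e1, e2]) = 1"
    proof -
      have "length (filter (traverses_up u) [e1, e2]) = card ({x. traverses_up u x} \<inter> set [e1, e2])"
        using C2 by (intro distinct_length_filter) simp
      also have "{x. traverses_up u x} \<inter> set [e1, e2] = {e \<in> C. traverses_up u e}" using C2 by auto
      finally show ?thesis using cu cC by simp
    qed
    have smI: "sum_list (map (\<lambda>i. ddir (u!i) (u!Suc i)) isl) = 0"
      unfolding isl_def using dd[OF inC(1)] dd[OF inC(2)] sum2[OF lf] by simp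
    have e1eq: "e1 = {u!ix e1, u!Suc (ix e1)}" and e2eq: "e2 = {u!ix e2, u!Suc (ix e2)}" using eqe inC by blast+
    have A: "Atyp m u (ix e1)"
      using t1 left_lft[of "u!ix e1" "u!Suc (ix e1)"] right_rgt[of m "u!ix e1" "u!Suc (ix e1)"]
        even_edge_p[of "u!ix e1" "u!Suc (ix e1)"] odd_edge_p[of "u!ix e1" "u!Suc (ix e1)"]
      unfolding Atyp_def e1eq[symmetric] by blast
    have B: "Btyp m u (ix e2)"
      using t2 left_lft[of "u!ix e2" "u!Suc (ix e2)"] right_rgt[of m "u!ix e2" "u!Suc (ix e2)"]
        even_edge_p[of "u!ix e2" "u!Suc (ix e2)"] odd_edge_p[of "u!ix e2" "u!Suc (ix e2)"]
      unfolding Btyp_def e2eq[symmetric] by blast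
    have "good m n u isl" unfolding good_def if_not_P[OF False] using disI EI smI A B isl_def by blast
    then show ?thesis by blast
  qed
  then obtain isl where gi: "good m n u isl" by blast
  have m44: "m - 4 + 4 = m" using m by simp
  have "cycc (m - 4) n c w" using cy by (simp add: K_def)
  moreover have "good (m - 4 + 4) n (map iota w) isl" using gi m44 by (simp add: u_def)
  ultimately show ?thesis by blast
qed

lemma iter:
  assumes n: "1 \<le> n" and K: "3 \<le> K" and cy: "cycc K n cl w" and g: "good (K + 4) n (map iota w) is"
  shows "\<exists>w' is'. cycc (K + 4 * k) n cl w' \<and> good (K + 4 * k + 4) n (map iota w') is'"
proof (induction k)
  case 0
  then show ?case using cy g by auto
next
  case (Suc k)
  then obtain w' is' where c': "cycc (K + 4 * k) n cl w'" and g': "good (K + 4 * k + 4) n (map iota w') is'"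
    by blast
  have K': "3 \<le> K + 4 * k" using K by simp
  have "\<exists>w'' is''. cycc (K + 4 * k + 4) n cl w'' \<and> good (K + 4 * k + 4 + 4) n (map iota w'') is''"
  proof (cases "even n")
    case True
    then show ?thesis using step_even[OF n True K' c' g'] by blast
  next
    case False
    then show ?thesis using step_odd[OF n False K' c' g'] by blast
  qed
  moreover have "K + 4 * Suc k = K + 4 * k + 4" by simp
  ultimately show ?case by metis
qed

lemma cycc_class_change:
  "cycc K n c w \<Longrightarrow> last w = sigma_pow K n c' (hd w) \<Longrightarrow> cycc K n c' w"
  unfolding cycc_def by blast

theorem corollary3p12:
  fixes m n :: nat and w :: "vtx list"
  assumes "7 \<le> m" and "1 \<le> n"
    and "tour_lift (m - 4) n w"
    and "extendable m n w"
  shows "(nullhomotopic (m - 4) n w \<longrightarrow>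
            (\<forall>k::nat. \<exists>w'. tour_lift (m + 4 * k) n w' \<and> nullhomotopic (m + 4 * k) n w'))
       \<and> (generating (m - 4) n w \<longrightarrow>
            (\<forall>k::nat. \<exists>w'. tour_lift (m + 4 * k) n w' \<and> generating (m + 4 * k) n w'))"
proof -
  note m = assms(1) and n = assms(2)
  obtain c isl where cy: "cycc (m - 4) n c w" and g: "good (m - 4 + 4) n (map iota w) isl"
    using base[OF n m assms(4)] by blast
  have K: "3 \<le> m - 4" using m by simp
  have hd0: "hd w = (0, 0)" using tour_lift_cycc[OF n assms(3)] by blast
  have mk: "m - 4 + 4 * Suc k = m + 4 * k" for k using m by simp
  have gen: "\<exists>w'. tour_lift (m + 4 * k) n w' \<and> last w' = sigma_pow (m + 4 * k) n cl (0, 0)"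
    if cl: "cycc (m - 4) n cl w" for cl k
  proof -
    obtain w1 is1 where c1: "cycc (m - 4 + 4 * Suc k) n cl w1"
      using iter[OF n K cl g] by blast
    then have "cycc (m + 4 * k) n cl w1" using mk by simp
    then show ?thesis using cycc_to_tour[OF n] m by simp
  qed
  have P1: "nullhomotopic (m - 4) n w \<longrightarrow>
            (\<forall>k::nat. \<exists>w'. tour_lift (m + 4 * k) n w' \<and> nullhomotopic (m + 4 * k) n w')"
  proof (intro impI allI)
    fix k assume "nullhomotopic (m - 4) n w"
    then have "last w = sigma_pow (m - 4) n 0 (hd w)" using hd0 by (simp add: nullhomotopic_def)
    then have c0: "cycc (m - 4) n 0 w" using cycc_class_change[OF cy] by blast
    obtain w' where "tour_lift (m + 4 * k) n w'" "last w' = sigma_pow (m + 4 * k) n 0 (0, 0)"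
      using gen[OF c0] by blast
    then show "\<exists>w'. tour_lift (m + 4 * k) n w' \<and> nullhomotopic (m + 4 * k) n w'"
      by (auto simp: nullhomotopic_def)
  qed
  have P2: "generating (m - 4) n w \<longrightarrow>
            (\<forall>k::nat. \<exists>w'. tour_lift (m + 4 * k) n w' \<and> generating (m + 4 * k) n w')"
  proof (intro impI allI)
    fix k assume G: "generating (m - 4) n w"
    obtain cl where cl: "cl = 1 \<or> cl = -1" and lw: "last w = sigma_pow (m - 4) n cl (hd w)"
    proof (cases "last w = (int (m - 4) - 1, int n)")
      case True
      then show ?thesis using that[of 1] hd0 by (simp add: sigma_pow_def)
    next
      case False
      then have "last w = (int (m - 4) - 1, - int n)" using G by (simp add: generating_def)
      then show ?thesis using that[of "-1"] hd0 by (simp add: sigma_pow_def)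
    qed
    have c1: "cycc (m - 4) n cl w" using cycc_class_change[OF cy lw] .
    obtain w' where t: "tour_lift (m + 4 * k) n w'" and l: "last w' = sigma_pow (m + 4 * k) n cl (0, 0)"
      using gen[OF c1] by blast
    have "generating (m + 4 * k) n w'" using cl l by (auto simp: generating_def sigma_pow_def)
    then show "\<exists>w'. tour_lift (m + 4 * k) n w' \<and> generating (m + 4 * k) n w'" using t by blast
  qed
  show ?thesis using P1 P2 by blast
qed

end
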